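(* Let $\alpha\ne0$ and let $(L(s),P(s))_{s\in\mathbb Z}$ be a solution of the cmKP hierarchy with gauge parameter $\alpha$. Let $\varphi(s,t)$ be a function satisfying $\partial\varphi/\partial x=b^{(1)}_1(s,t)$ and $\partial\varphi/\partial t_n=b^{(n)}_n(s,t)$ for all $n\ge1$. Then for any $\beta$ (including $\beta=0$), the pair $$\tilde L(s):=e^{(\alpha-\beta)\varphi(s,t)}L(s)e^{-(\alpha-\beta)\varphi(s,t)},\qquad \tilde P(s):=e^{(\alpha-\beta)\varphi(s+1,t)}P(s)e^{-(\alpha-\beta)\varphi(s,t)}$$ is a solution of the cmKP hierarchy with gauge parameter $\beta$ (for $\beta=0$ the system with $B_n(s)=(L(s)^n)_{\ge0}$). Consequently the cmKP hierarchies with different gauge parameters are equivalent via this transformation.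
   Context: Let $s\in\mathbb Z$, $t=(t_1,t_2,\dots)$, $\partial=\partial_x$; operators are formal microdifferential operators in $\partial$ with coefficients depending on $(s,x,t)$, and $(\cdot)_{\ge0}$ is the projection onto the differential operator part. Fix a gauge parameter $\alpha$. Consider $L(s)=\partial+u_1(s,t)+u_2(s,t)\partial^{-1}+\cdots$ and $P(s)=p_0(s,t)\partial+p_1(s,t)$ with $p_0$ nowhere zero, subject to $(1-\alpha)p_0u_1+\alpha p_1=0$. Define $P^{(n)}(s)=P(s+n-1)\cdots P(s+1)P(s)$ for $n>0$, $P^{(0)}(s)=1$, $P^{(n)}(s)=P(s+n)^{-1}\cdots P(s-2)^{-1}P(s-1)^{-1}$ for $n<0$. Every microdifferential operator has a unique expansion $\sum_\nu a_\nu P^{(\nu)}(s)$; write $L(s)^n=\sum_{j\ge0}b^{(n)}_j(s,t)P^{(n-j)}(s)$ and define $B_n(s):=(L(s)^n)_{\ge0}-\alpha b^{(n)}_n(s,t)=\sum_{j=0}^{n-1}b^{(n)}_jP^{(n-j)}(s)+(1-\alpha)b^{(n)}_n$ (the constraint is equivalent to $B_1(s)=\partial$). The cmKP hierarchy with gauge parameter $\alpha$ is the system $\partial_{t_n}L(s)=[B_n(s),L(s)]$, $L(s+1)P(s)=P(s)L(s)$, $\partial_{t_n}P(s)=B_n(s+1)P(s)-P(s)B_n(s)$ for all $s\in\mathbb Z$, $n\ge1$. *)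

theory Defs
  imports "HOL-Analysis.Analysis"
begin

text \<open>A point is p :: nat => real, where coordinate 0 is x
  and coordinate n (n >= 1) is the time t_n.  The discrete variable s is kept
  as an outer index (operators are families indexed by s :: int).\<close>

type_synonym coef = "(nat \<Rightarrow> real) \<Rightarrow> complex"

text \<open>Formal microdifferential operators: A m is the coefficient of d^m (m :: int).\<close>
type_synonym mdo = "int \<Rightarrow> coef"

definition cm_pd :: "nat \<Rightarrow> coef \<Rightarrow> coef" where
  "cm_pd i f = (\<lambda>p. vector_derivative (\<lambda>y. f (p(i := y))) (at (p i)))"

fun cm_iter_pd :: "nat list \<Rightarrow> coef \<Rightarrow> coef" where
  "cm_iter_pd [] f = f"
| "cm_iter_pd (i # is) f = cm_pd i (cm_iter_pd is f)"

definition cm_smooth :: "coef \<Rightarrow> bool" where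
  "cm_smooth f \<longleftrightarrow>
     (\<forall>ds i p. (\<lambda>y. cm_iter_pd ds f (p(i := y))) differentiable (at (p i))) \<and>
     (\<forall>ds i j. cm_pd i (cm_pd j (cm_iter_pd ds f)) = cm_pd j (cm_pd i (cm_iter_pd ds f)))"

definition is_mdo :: "mdo \<Rightarrow> bool" where
  "is_mdo A \<longleftrightarrow> (\<exists>N. \<forall>m>N. A m = (\<lambda>p. 0))"

definition cm_ub :: "mdo \<Rightarrow> int" where
  "cm_ub A = (SOME N. \<forall>m>N. A m = (\<lambda>p. 0))"

text \<open>Product: (a d^i)(b d^j) = sum_k binom(i,k) a (d_x^k b) d^(i+j-k).\<close>
definition cm_mul :: "mdo \<Rightarrow> mdo \<Rightarrow> mdo" where
  "cm_mul A B = (\<lambda>m p. \<Sum>i\<in>{m - cm_ub B .. cm_ub A}. \<Sum>k\<in>{0..nat (cm_ub A + cm_ub B - m)}.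
       ((of_int i :: complex) gchoose k) * A i p * (cm_pd 0 ^^ k) (B (m - i + int k)) p)"

definition cm_const :: "coef \<Rightarrow> mdo" where
  "cm_const c = (\<lambda>m. if m = 0 then c else (\<lambda>p. 0))"

definition cm_one :: mdo where
  "cm_one = cm_const (\<lambda>p. 1)"

definition cm_add :: "mdo \<Rightarrow> mdo \<Rightarrow> mdo" where
  "cm_add A B = (\<lambda>m p. A m p + B m p)"

definition cm_sub :: "mdo \<Rightarrow> mdo \<Rightarrow> mdo" where
  "cm_sub A B = (\<lambda>m p. A m p - B m p)"

definition cm_comm :: "mdo \<Rightarrow> mdo \<Rightarrow> mdo" where
  "cm_comm A B = cm_sub (cm_mul A B) (cm_mul B A)"

definition cm_proj :: "mdo \<Rightarrow> mdo" where
  "cm_proj A = (\<lambda>m. if m \<ge> 0 then A m else (\<lambda>p. 0))"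

definition cm_dop :: "nat \<Rightarrow> mdo \<Rightarrow> mdo" where
  "cm_dop i A = (\<lambda>m. cm_pd i (A m))"

fun cm_pow :: "mdo \<Rightarrow> nat \<Rightarrow> mdo" where
  "cm_pow A 0 = cm_one"
| "cm_pow A (Suc n) = cm_mul A (cm_pow A n)"

definition cm_inv :: "mdo \<Rightarrow> mdo" where
  "cm_inv A = (THE B. is_mdo B \<and> cm_mul B A = cm_one \<and> cm_mul A B = cm_one)"

fun cm_Pup :: "(int \<Rightarrow> mdo) \<Rightarrow> int \<Rightarrow> nat \<Rightarrow> mdo" where
  "cm_Pup P s 0 = cm_one"
| "cm_Pup P s (Suc k) = cm_mul (P (s + int k)) (cm_Pup P s k)"

fun cm_Pdown :: "(int \<Rightarrow> mdo) \<Rightarrow> int \<Rightarrow> nat \<Rightarrow> mdo" where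
  "cm_Pdown P s 0 = cm_one"
| "cm_Pdown P s (Suc k) = cm_mul (cm_inv (P (s - int (Suc k)))) (cm_Pdown P s k)"

definition cm_Pn :: "(int \<Rightarrow> mdo) \<Rightarrow> int \<Rightarrow> int \<Rightarrow> mdo" where
  "cm_Pn P s n = (if n \<ge> 0 then cm_Pup P s (nat n) else cm_Pdown P s (nat (- n)))"

text \<open>Coefficients b^(n)_j(s) of the expansion L(s)^n = sum_j b^(n)_j(s) P^(n-j)(s).\<close>
definition cm_b :: "(int \<Rightarrow> mdo) \<Rightarrow> (int \<Rightarrow> mdo) \<Rightarrow> int \<Rightarrow> nat \<Rightarrow> nat \<Rightarrow> coef" where
  "cm_b L P s n = (THE b. \<forall>m. cm_pow (L s) n m =
      (\<lambda>p. \<Sum>j\<in>{j::nat. int j \<le> int n - m}.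
              cm_mul (cm_const (b j)) (cm_Pn P s (int n - int j)) m p))"

definition cm_B :: "complex \<Rightarrow> (int \<Rightarrow> mdo) \<Rightarrow> (int \<Rightarrow> mdo) \<Rightarrow> int \<Rightarrow> nat \<Rightarrow> mdo" where
  "cm_B \<alpha> L P s n = cm_sub (cm_proj (cm_pow (L s) n)) (cm_const (\<lambda>p. \<alpha> * cm_b L P s n n p))"

definition cmKP :: "complex \<Rightarrow> (int \<Rightarrow> mdo) \<Rightarrow> (int \<Rightarrow> mdo) \<Rightarrow> bool" where
  "cmKP \<alpha> L P \<longleftrightarrow>
     (\<forall>s. is_mdo (L s) \<and> L s 1 = (\<lambda>p. 1) \<and> (\<forall>m>1. L s m = (\<lambda>p. 0)) \<and> (\<forall>m. cm_smooth (L s m))) \<and>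
     (\<forall>s. (\<forall>m. m \<noteq> 0 \<and> m \<noteq> 1 \<longrightarrow> P s m = (\<lambda>p. 0)) \<and> (\<forall>p. P s 1 p \<noteq> 0) \<and>
          cm_smooth (P s 0) \<and> cm_smooth (P s 1)) \<and>
     (\<forall>s p. (1 - \<alpha>) * P s 1 p * L s 0 p + \<alpha> * P s 0 p = 0) \<and>
     (\<forall>s. cm_mul (L (s + 1)) (P s) = cm_mul (P s) (L s)) \<and>
     (\<forall>n\<ge>1. \<forall>s. cm_dop n (L s) = cm_comm (cm_B \<alpha> L P s n) (L s)) \<and>
     (\<forall>n\<ge>1. \<forall>s. cm_dop n (P s) =
          cm_sub (cm_mul (cm_B \<alpha> L P (s + 1) n) (P s)) (cm_mul (P s) (cm_B \<alpha> L P s n)))"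

end

theory Submission
  imports Defs "HOL-Computational_Algebra.Formal_Power_Series" "HOL-Library.Groups_Big_Fun"
begin

definition ld :: "coef \<Rightarrow> bool" where
  "ld f \<longleftrightarrow> (\<forall>i p. (\<lambda>y. f (p(i := y))) differentiable (at (p i)))"

lemma ld_at: "ld f \<Longrightarrow> (\<lambda>y. f (p(i := y))) differentiable (at y0)"
proof -
  assume "ld f"
  then have "(\<lambda>y. f ((p(i:=y0))(i := y))) differentiable (at ((p(i:=y0)) i))"
    unfolding ld_def by blast
  then show ?thesis by simp
qed

lemma ld_hvd: "ld f \<Longrightarrow> ((\<lambda>y. f (p(i := y))) has_vector_derivative cm_pd i f (p(i:=y0))) (at y0)"
proof -
  assume a: "ld f"
  have "cm_pd i f (p(i:=y0)) = vector_derivative (\<lambda>y. f (p(i := y))) (at y0)"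
    unfolding cm_pd_def by simp
  then show ?thesis using ld_at[OF a] vector_derivative_works by metis
qed

lemma ld_hvd0: "ld f \<Longrightarrow> ((\<lambda>y. f (p(i := y))) has_vector_derivative cm_pd i f p) (at (p i))"
  using ld_hvd[of f p i "p i"] by simp

lemma pd_from_hvd:
  assumes "\<And>p. ((\<lambda>y. g (p(i := y))) has_vector_derivative h p) (at (p i))"
  shows "cm_pd i g = h"
  unfolding cm_pd_def using assms vector_derivative_at by (intro ext) blast

lemma ld_from_hvd:
  assumes "\<And>p. ((\<lambda>y. g (p(i := y))) has_vector_derivative h p) (at (p i))"
  shows "\<forall>p. (\<lambda>y. g (p(i := y))) differentiable (at (p i))"
  using assms differentiableI_vector by blast

lemma pd_const[simp]: "cm_pd i (\<lambda>p. c) = (\<lambda>p. 0)"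
  by (rule pd_from_hvd) (rule has_vector_derivative_const)

lemma pd_add:
  assumes "ld f" "ld g"
  shows "cm_pd i (\<lambda>p. f p + g p) = (\<lambda>p. cm_pd i f p + cm_pd i g p)"
  by (rule pd_from_hvd, rule has_vector_derivative_add, rule ld_hvd0[OF assms(1)], rule ld_hvd0[OF assms(2)])

lemma pd_mult:
  assumes "ld f" "ld g"
  shows "cm_pd i (\<lambda>p. f p * g p) = (\<lambda>p. f p * cm_pd i g p + cm_pd i f p * g p)"
proof (rule pd_from_hvd)
  fix p
  show "((\<lambda>y. f (p(i := y)) * g (p(i := y))) has_vector_derivative f p * cm_pd i g p + cm_pd i f p * g p) (at (p i))"
    using has_vector_derivative_mult[OF ld_hvd0[OF assms(1), of p i] ld_hvd0[OF assms(2), of p i]] by simp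
qed

lemma hvd_exp:
  assumes "ld f"
  shows "((\<lambda>y. exp (f (p(i := y)))) has_vector_derivative exp (f p) * cm_pd i f p) (at (p i))"
proof -
  have d: "(exp has_field_derivative exp (f p)) (at (f (p(i := p i))))"
    using DERIV_exp[of "f p"] by simp
  have "((exp \<circ> (\<lambda>y. f (p(i := y)))) has_vector_derivative cm_pd i f p * exp (f p)) (at (p i))"
    by (rule field_vector_diff_chain_at[OF ld_hvd0[OF assms(1), of p i] d])
  then show ?thesis by (simp add: o_def mult.commute)
qed

lemma hvd_inv:
  assumes "ld f" "\<And>p. f p \<noteq> 0"
  shows "((\<lambda>y. inverse (f (p(i := y)))) has_vector_derivative - (cm_pd i f p * (inverse (f p) * inverse (f p)))) (at (p i))"
proof -
  have d: "(inverse has_field_derivative - (inverse (f p) ^ Suc (Suc 0))) (at (f (p(i := p i))))"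
    using DERIV_inverse[OF assms(2)[of p]] by simp
  have "((inverse \<circ> (\<lambda>y. f (p(i := y)))) has_vector_derivative cm_pd i f p * (- (inverse (f p) ^ Suc (Suc 0)))) (at (p i))"
    by (rule field_vector_diff_chain_at[OF ld_hvd0[OF assms(1), of p i] d])
  then show ?thesis by (simp add: o_def)
qed

lemma pd_exp:
  assumes "ld f"
  shows "cm_pd i (\<lambda>p. exp (f p)) = (\<lambda>p. exp (f p) * cm_pd i f p)"
  by (rule pd_from_hvd, rule hvd_exp[OF assms])

lemma pd_inv:
  assumes "ld f" "\<And>p. f p \<noteq> 0"
  shows "cm_pd i (\<lambda>p. inverse (f p)) = (\<lambda>p. - (cm_pd i f p * (inverse (f p) * inverse (f p))))"
  by (rule pd_from_hvd, rule hvd_inv[OF assms])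

inductive_set SM :: "coef set" where
  SM_base: "cm_smooth f \<Longrightarrow> f \<in> SM"
| SM_const: "(\<lambda>p. c) \<in> SM"
| SM_add: "f \<in> SM \<Longrightarrow> g \<in> SM \<Longrightarrow> (\<lambda>p. f p + g p) \<in> SM"
| SM_mult: "f \<in> SM \<Longrightarrow> g \<in> SM \<Longrightarrow> (\<lambda>p. f p * g p) \<in> SM"
| SM_exp: "f \<in> SM \<Longrightarrow> (\<lambda>p. exp (f p)) \<in> SM"
| SM_inv: "f \<in> SM \<Longrightarrow> (\<And>p. f p \<noteq> 0) \<Longrightarrow> (\<lambda>p. inverse (f p)) \<in> SM"

lemma smooth_ld: "cm_smooth f \<Longrightarrow> ld f"
  unfolding cm_smooth_def ld_def using cm_iter_pd.simps(1) by metis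

lemma iter_pd_snoc: "cm_iter_pd (ds @ [i]) f = cm_iter_pd ds (cm_pd i f)"
  by (induction ds) auto

lemma smooth_pd: "cm_smooth f \<Longrightarrow> cm_smooth (cm_pd i f)"
  unfolding cm_smooth_def by (metis iter_pd_snoc)

lemma smooth_comm: "cm_smooth f \<Longrightarrow> cm_pd i (cm_pd j f) = cm_pd j (cm_pd i f)"
  unfolding cm_smooth_def by (metis cm_iter_pd.simps(1))

lemma SM_ld: "f \<in> SM \<Longrightarrow> ld f"
proof (induction rule: SM.induct)
  case (SM_base f) then show ?case by (rule smooth_ld)
next
  case (SM_const c) then show ?case unfolding ld_def by simp
next
  case (SM_add f g) show ?case unfolding ld_def
  proof (intro allI)
    fix i p
    show "(\<lambda>y. f (p(i := y)) + g (p(i := y))) differentiable at (p i)"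
      using has_vector_derivative_add[OF ld_hvd0[OF SM_add.IH(1), of p i] ld_hvd0[OF SM_add.IH(2), of p i]]
      by (rule differentiableI_vector)
  qed
next
  case (SM_mult f g) show ?case unfolding ld_def
  proof (intro allI)
    fix i p
    show "(\<lambda>y. f (p(i := y)) * g (p(i := y))) differentiable at (p i)"
      using has_vector_derivative_mult[OF ld_hvd0[OF SM_mult.IH(1), of p i] ld_hvd0[OF SM_mult.IH(2), of p i]]
      by (rule differentiableI_vector)
  qed
next
  case (SM_exp f)
  show ?case unfolding ld_def by (intro allI differentiableI_vector[OF hvd_exp[OF SM_exp.IH]])
next
  case (SM_inv f)
  show ?case unfolding ld_def by (intro allI differentiableI_vector[OF hvd_inv[OF SM_inv(3) SM_inv(2)]])
qed

lemma pd_neg: "ld f \<Longrightarrow> cm_pd i (\<lambda>p. - f p) = (\<lambda>p. - cm_pd i f p)"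
  by (rule pd_from_hvd, rule has_vector_derivative_minus, rule ld_hvd0)

lemma SM_neg: "f \<in> SM \<Longrightarrow> (\<lambda>p. - f p) \<in> SM"
proof -
  assume "f \<in> SM"
  then have "(\<lambda>p. (-1) * f p) \<in> SM" by (intro SM_mult SM_const)
  then show ?thesis by simp
qed

lemma SM_pd: "f \<in> SM \<Longrightarrow> cm_pd i f \<in> SM"
proof (induction rule: SM.induct)
  case (SM_base f) then show ?case by (intro SM.SM_base smooth_pd)
next
  case (SM_const c) then show ?case by (simp add: SM.SM_const)
next
  case (SM_add f g) then show ?case by (simp add: pd_add SM_ld SM.SM_add)
next
  case (SM_mult f g) then show ?case by (simp add: pd_mult SM_ld SM.SM_add SM.SM_mult)
next
  case (SM_exp f) then show ?case by (simp add: pd_exp SM_ld SM.SM_exp SM.SM_mult)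
next
  case (SM_inv f) then show ?case by (simp add: pd_inv SM_ld SM.SM_inv SM.SM_mult SM_neg)
qed

lemma SM_comm: "f \<in> SM \<Longrightarrow> cm_pd i (cm_pd j f) = cm_pd j (cm_pd i f)"
proof (induction rule: SM.induct)
  case (SM_base f) then show ?case by (rule smooth_comm)
next
  case (SM_const c) then show ?case by simp
next
  case (SM_add f g)
  have l: "ld f" "ld g" "ld (cm_pd i f)" "ld (cm_pd j f)" "ld (cm_pd i g)" "ld (cm_pd j g)"
    using SM_add SM_ld SM_pd by auto
  show ?case using SM_add.IH by (simp add: pd_add l)
next
  case (SM_mult f g)
  have l: "ld f" "ld g" "ld (cm_pd i f)" "ld (cm_pd j f)" "ld (cm_pd i g)" "ld (cm_pd j g)"
    using SM_mult SM_ld SM_pd by auto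
  have l2: "ld (\<lambda>p. f p * cm_pd j g p)" "ld (\<lambda>p. cm_pd j f p * g p)"
     "ld (\<lambda>p. f p * cm_pd i g p)" "ld (\<lambda>p. cm_pd i f p * g p)"
    using SM_mult SM_ld SM_pd SM.SM_mult by auto
  show ?case using SM_mult.IH
    apply (simp only: pd_mult[OF l(1) l(2)])
    apply (simp only: pd_add[OF l2(1) l2(2)] pd_add[OF l2(3) l2(4)])
    apply (simp only: pd_mult l)
    by (simp add: algebra_simps)
next
  case (SM_exp f)
  have l: "ld f" "ld (cm_pd i f)" "ld (cm_pd j f)" "ld (\<lambda>p. exp (f p))"
    using SM_exp SM_ld SM_pd SM.SM_exp by auto
  show ?case using SM_exp.IH
    by (simp add: pd_mult pd_exp l algebra_simps)
next
  case (SM_inv f)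
  have l: "ld f" "ld (cm_pd i f)" "ld (cm_pd j f)" "ld (\<lambda>p. inverse (f p))"
    using SM_inv SM_ld SM_pd SM.SM_inv by auto
  have l2: "ld (\<lambda>p. inverse (f p) * inverse (f p))"
    using SM_inv SM_ld SM.SM_inv SM.SM_mult by auto
  have l3: "ld (\<lambda>p. cm_pd k f p * (inverse (f p) * inverse (f p)))" for k
    using SM_inv SM_ld SM_pd SM.SM_inv SM.SM_mult by auto
  show ?case using SM_inv.IH
    apply (simp only: pd_inv[OF l(1) SM_inv.hyps(2)])
    apply (simp only: pd_neg[OF l3])
    apply (simp only: pd_mult[OF l(2) l2] pd_mult[OF l(3) l2])
    apply (simp only: pd_mult[OF l(4) l(4)])
    apply (simp only: pd_inv[OF l(1) SM_inv.hyps(2)])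
    by (simp add: algebra_simps)
qed

lemma SM_iter: "f \<in> SM \<Longrightarrow> cm_iter_pd ds f \<in> SM"
  by (induction ds) (auto intro: SM_pd)

lemma SM_smooth: "f \<in> SM \<Longrightarrow> cm_smooth f"
  unfolding cm_smooth_def
proof (intro conjI allI)
  fix ds i p assume "f \<in> SM"
  then show "(\<lambda>y. cm_iter_pd ds f (p(i := y))) differentiable at (p i)"
    using SM_iter SM_ld ld_def by blast
next
  fix ds i j assume "f \<in> SM"
  then show "cm_pd i (cm_pd j (cm_iter_pd ds f)) = cm_pd j (cm_pd i (cm_iter_pd ds f))"
    using SM_iter SM_comm by blast
qed

lemma SM_iff: "f \<in> SM \<longleftrightarrow> cm_smooth f"
  using SM_smooth SM_base by blast

lemma smooth_const[simp]: "cm_smooth (\<lambda>p. c)"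
  using SM_const SM_smooth by blast
lemma smooth_add[intro]: "cm_smooth f \<Longrightarrow> cm_smooth g \<Longrightarrow> cm_smooth (\<lambda>p. f p + g p)"
  using SM_add SM_iff by blast
lemma smooth_mult[intro]: "cm_smooth f \<Longrightarrow> cm_smooth g \<Longrightarrow> cm_smooth (\<lambda>p. f p * g p)"
  using SM_mult SM_iff by blast
lemma smooth_exp[intro]: "cm_smooth f \<Longrightarrow> cm_smooth (\<lambda>p. exp (f p))"
  using SM_exp SM_iff by blast
lemma smooth_inv[intro]: "cm_smooth f \<Longrightarrow> (\<And>p. f p \<noteq> 0) \<Longrightarrow> cm_smooth (\<lambda>p. inverse (f p))"
  using SM_inv SM_iff by blast
lemma smooth_neg[intro]: "cm_smooth f \<Longrightarrow> cm_smooth (\<lambda>p. - f p)"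
  using SM_neg SM_iff by blast
lemma smooth_diff[intro]: "cm_smooth f \<Longrightarrow> cm_smooth g \<Longrightarrow> cm_smooth (\<lambda>p. f p - g p)"
  using smooth_add[of f "\<lambda>p. - g p"] smooth_neg by simp
lemma smooth_cmult[intro]: "cm_smooth f \<Longrightarrow> cm_smooth (\<lambda>p. c * f p)"
  using smooth_mult[OF smooth_const] by blast
lemma smooth_div[intro]: "cm_smooth f \<Longrightarrow> cm_smooth g \<Longrightarrow> (\<And>p. g p \<noteq> 0) \<Longrightarrow> cm_smooth (\<lambda>p. f p / g p)"
  using smooth_mult[OF _ smooth_inv[of g]] by (simp add: divide_inverse)
lemma smooth_sum[intro]: "(\<And>x. x \<in> S \<Longrightarrow> cm_smooth (F x)) \<Longrightarrow> cm_smooth (\<lambda>p. \<Sum>x\<in>S. F x p)"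
proof (induction S rule: infinite_finite_induct)
  case (infinite A) then show ?case by simp
next
  case empty then show ?case by simp
next
  case (insert x F) then show ?case by (simp add: smooth_add)
qed


abbreviation Dx :: "nat \<Rightarrow> coef \<Rightarrow> coef" where
  "Dx k f \<equiv> (cm_pd 0 ^^ k) f"

lemma Dx_Suc': "Dx (Suc k) f = Dx k (cm_pd 0 f)"
  by (simp only: funpow_Suc_right o_apply)

lemma Dx_zero[simp]: "Dx k (\<lambda>p. 0) = (\<lambda>p. 0)"
  by (induction k) auto

lemma Dx_const: "k > 0 \<Longrightarrow> Dx k (\<lambda>p. c) = (\<lambda>p. 0)"
proof (cases k)
  case (Suc j) then show ?thesis by (simp only: Dx_Suc' pd_const Dx_zero)
qed auto

lemma smooth_Dx[intro]: "cm_smooth f \<Longrightarrow> cm_smooth (Dx k f)"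
  by (induction k) (auto intro: smooth_pd)

lemma Dx_add: "cm_smooth f \<Longrightarrow> cm_smooth g \<Longrightarrow> Dx k (\<lambda>p. f p + g p) = (\<lambda>p. Dx k f p + Dx k g p)"
proof (induction k)
  case 0 then show ?case by simp
next
  case (Suc k) then show ?case by (simp add: pd_add smooth_ld smooth_Dx)
qed

lemma Dx_neg: "cm_smooth f \<Longrightarrow> Dx k (\<lambda>p. - f p) = (\<lambda>p. - Dx k f p)"
proof (induction k)
  case 0 then show ?case by simp
next
  case (Suc k) then show ?case by (simp add: pd_neg smooth_ld smooth_Dx)
qed

lemma Dx_diff: "cm_smooth f \<Longrightarrow> cm_smooth g \<Longrightarrow> Dx k (\<lambda>p. f p - g p) = (\<lambda>p. Dx k f p - Dx k g p)"
  using Dx_add[of f "\<lambda>p. - g p" k] Dx_neg[of g k] by (simp add: smooth_neg)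

lemma Dx_sum: "(\<And>x. x \<in> S \<Longrightarrow> cm_smooth (F x)) \<Longrightarrow> Dx k (\<lambda>p. \<Sum>x\<in>S. F x p) = (\<lambda>p. \<Sum>x\<in>S. Dx k (F x) p)"
proof (induction S rule: infinite_finite_induct)
  case (infinite A) then show ?case by simp
next
  case empty then show ?case by simp
next
  case (insert x F) then show ?case by (simp add: Dx_add smooth_sum)
qed

lemma pd_cmult: "ld f \<Longrightarrow> cm_pd i (\<lambda>p. c * f p) = (\<lambda>p. c * cm_pd i f p)"
  using pd_mult[of "\<lambda>p. c" f i] by (simp add: ld_def)

lemma Dx_cmult: "cm_smooth f \<Longrightarrow> Dx k (\<lambda>p. c * f p) = (\<lambda>p. c * Dx k f p)"
proof (induction k)
  case 0 then show ?case by simp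
next
  case (Suc k) then show ?case by (simp add: pd_cmult smooth_ld smooth_Dx)
qed

lemma pd_sum: "(\<And>x. x \<in> S \<Longrightarrow> cm_smooth (F x)) \<Longrightarrow> cm_pd i (\<lambda>p. \<Sum>x\<in>S. F x p) = (\<lambda>p. \<Sum>x\<in>S. cm_pd i (F x) p)"
proof (induction S rule: infinite_finite_induct)
  case (infinite A) then show ?case by simp
next
  case empty then show ?case by simp
next
  case (insert x F) then show ?case by (simp add: pd_add smooth_sum smooth_ld)
qed

lemma leibniz_step:
  fixes F G :: "nat \<Rightarrow> complex"
  shows "(\<Sum>a\<le>k. of_nat (k choose a) * (F a * G (Suc (k - a)) + F (Suc a) * G (k - a)))
       = (\<Sum>a\<le>Suc k. of_nat (Suc k choose a) * F a * G (Suc k - a))"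
proof -
  let ?S1 = "(\<Sum>a\<le>k. of_nat (k choose a) * F (Suc a) * G (k - a))"
  let ?S2 = "(\<Sum>a\<le>k. of_nat (k choose Suc a) * F (Suc a) * G (k - a))"
  let ?T = "(\<Sum>a\<le>k. of_nat (k choose a) * F a * G (Suc (k - a)))"
  have A: "(\<Sum>a\<le>Suc k. of_nat (Suc k choose a) * F a * G (Suc k - a)) = F 0 * G (Suc k) + ?S1 + ?S2"
    by (subst sum.atMost_Suc_shift) (simp add: sum.distrib algebra_simps)
  have B1: "(\<Sum>a\<le>Suc k. of_nat (k choose a) * F a * G (Suc k - a)) = F 0 * G (Suc k) + ?S2"
    by (subst sum.atMost_Suc_shift) simp
  have B2: "(\<Sum>a\<le>Suc k. of_nat (k choose a) * F a * G (Suc k - a)) = ?T"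
    by (simp add: Suc_diff_le)
  have L: "(\<Sum>a\<le>k. of_nat (k choose a) * (F a * G (Suc (k - a)) + F (Suc a) * G (k - a))) = ?T + ?S1"
    by (simp add: sum.distrib algebra_simps)
  show ?thesis using A B1 B2 L by simp
qed

lemma Dx_mult: "cm_smooth f \<Longrightarrow> cm_smooth g \<Longrightarrow>
   Dx k (\<lambda>p. f p * g p) = (\<lambda>p. \<Sum>a\<le>k. of_nat (k choose a) * Dx a f p * Dx (k - a) g p)"
proof (induction k)
  case 0 then show ?case by simp
next
  case (Suc k)
  have sm: "cm_smooth (\<lambda>p. of_nat (k choose a) * Dx a f p * Dx (k - a) g p)" for a
    using Suc.prems by (intro smooth_mult smooth_Dx smooth_const)
  have "Dx (Suc k) (\<lambda>p. f p * g p) = cm_pd 0 (\<lambda>p. \<Sum>a\<le>k. of_nat (k choose a) * Dx a f p * Dx (k - a) g p)"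
    using Suc by simp
  also have "\<dots> = (\<lambda>p. \<Sum>a\<le>k. cm_pd 0 (\<lambda>p. of_nat (k choose a) * Dx a f p * Dx (k - a) g p) p)"
    by (rule pd_sum) (rule sm)
  also have "\<dots> = (\<lambda>p. \<Sum>a\<le>k. of_nat (k choose a) * (Dx a f p * Dx (Suc (k - a)) g p + Dx (Suc a) f p * Dx (k - a) g p))"
  proof -
    have "cm_pd 0 (\<lambda>p. of_nat (k choose a) * Dx a f p * Dx (k - a) g p) = 
       (\<lambda>p. of_nat (k choose a) * (Dx a f p * Dx (Suc (k - a)) g p + Dx (Suc a) f p * Dx (k - a) g p))" for a
    proof -
      have "cm_pd 0 (\<lambda>p. of_nat (k choose a) * Dx a f p * Dx (k - a) g p) =
            cm_pd 0 (\<lambda>p. of_nat (k choose a) * (Dx a f p * Dx (k - a) g p))"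
        by (simp add: mult.assoc)
      also have "\<dots> = (\<lambda>p. of_nat (k choose a) * cm_pd 0 (\<lambda>p. Dx a f p * Dx (k - a) g p) p)"
        using Suc.prems by (intro pd_cmult smooth_ld smooth_mult smooth_Dx)
      also have "\<dots> = (\<lambda>p. of_nat (k choose a) * (Dx a f p * Dx (Suc (k - a)) g p + Dx (Suc a) f p * Dx (k - a) g p))"
        using Suc.prems by (simp add: pd_mult smooth_ld smooth_Dx)
      finally show ?thesis .
    qed
    then show ?thesis by simp
  qed
  also have "\<dots> = (\<lambda>p. \<Sum>a\<le>Suc k. of_nat (Suc k choose a) * Dx a f p * Dx (Suc k - a) g p)"
    by (rule ext, rule leibniz_step)
  finally show ?case .
qed

lemma pd_Dx_comm: "cm_smooth f \<Longrightarrow> cm_pd n (Dx k f) = Dx k (cm_pd n f)"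
proof (induction k)
  case 0 then show ?case by simp
next
  case (Suc k)
  then show ?case by (simp add: smooth_comm[OF smooth_Dx[OF Suc.prems]])
qed


lemma SA_cmult: "Sum_any (\<lambda>x. (c::complex) * f x) = c * Sum_any f"
proof (cases "c = 0")
  case True then show ?thesis by simp
next
  case False
  then have "{x. c * f x \<noteq> 0} = {x. f x \<noteq> 0}" by auto
  then show ?thesis by (simp add: Sum_any.expand_set sum_distrib_left)
qed

lemma SA_multc: "Sum_any (\<lambda>x. f x * (c::complex)) = Sum_any f * c"
  using SA_cmult[of c f] by (simp add: mult.commute)

lemma SA_box: "finite X \<Longrightarrow> (\<And>x. x \<notin> X \<Longrightarrow> f x = 0) \<Longrightarrow> Sum_any f = sum f X"
  by (rule Sum_any.expand_superset) auto

lemma SA_nest: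
  assumes "finite X" "\<And>a b. g a b \<noteq> 0 \<Longrightarrow> (a, b) \<in> X"
  shows "Sum_any (\<lambda>a. Sum_any (g a)) = Sum_any (\<lambda>(a, b). g a b)"
proof (rule Sum_any.cartesian_product[of "fst ` X \<times> snd ` X"])
  show "finite (fst ` X \<times> snd ` X)" using assms(1) by simp
  show "{a. \<exists>b. g a b \<noteq> 0} \<times> {b. \<exists>a. g a b \<noteq> 0} \<subseteq> fst ` X \<times> snd ` X"
    using assms(2) by (force simp: image_iff)
qed

lemma SA_inj:
  assumes "inj h" "\<And>x. x \<notin> range h \<Longrightarrow> F x = 0"
  shows "Sum_any F = Sum_any (F \<circ> h)"
proof -
  have "x \<in> h ` {y. (F \<circ> h) y \<noteq> 0}" if "F x \<noteq> 0" for x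
  proof -
    from assms(2) that obtain y where "x = h y" by blast
    then show ?thesis using that by auto
  qed
  then have "{x. F x \<noteq> 0} = h ` {y. (F \<circ> h) y \<noteq> 0}"
    by auto
  moreover have "inj_on h {y. (F \<circ> h) y \<noteq> 0}" using assms(1) by (simp add: inj_on_def inj_def)
  ultimately show ?thesis
    by (simp add: Sum_any.expand_set sum.reindex)
qed

lemma SA_atMost: "(\<And>a. a > k \<Longrightarrow> f a = 0) \<Longrightarrow> (\<Sum>a\<le>(k::nat). f a) = Sum_any f"
  by (rule SA_box[symmetric]) auto

definition bnd :: "mdo \<Rightarrow> int \<Rightarrow> bool" where
  "bnd A N \<longleftrightarrow> (\<forall>m>N. A m = (\<lambda>p. 0))"

definition good :: "mdo \<Rightarrow> bool" where
  "good A \<longleftrightarrow> is_mdo A \<and> (\<forall>m. cm_smooth (A m))"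

lemma is_mdo_bnd: "is_mdo A \<longleftrightarrow> (\<exists>N. bnd A N)"
  unfolding is_mdo_def bnd_def by simp

lemma ub_bnd: "is_mdo A \<Longrightarrow> bnd A (cm_ub A)"
  unfolding is_mdo_def bnd_def cm_ub_def by (rule someI_ex)

lemma bnd_mono: "bnd A N \<Longrightarrow> N \<le> N' \<Longrightarrow> bnd A N'"
  unfolding bnd_def by auto

lemma bnd_zero: "bnd A N \<Longrightarrow> m > N \<Longrightarrow> A m p = 0"
  unfolding bnd_def by auto

lemma nzA: "bnd A N \<Longrightarrow> A i p \<noteq> 0 \<Longrightarrow> i \<le> N"
  using bnd_zero by (meson not_le)

lemma nzD: "bnd A N \<Longrightarrow> Dx k (A i) p \<noteq> 0 \<Longrightarrow> i \<le> N"
  unfolding bnd_def by (metis Dx_zero not_le)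

definition mterm :: "mdo \<Rightarrow> mdo \<Rightarrow> int \<Rightarrow> (nat \<Rightarrow> real) \<Rightarrow> int \<times> nat \<Rightarrow> complex" where
  "mterm A B m p = (\<lambda>(i, k). ((of_int i :: complex) gchoose k) * A i p * Dx k (B (m - i + int k)) p)"

lemma box_SA:
  fixes T :: "int \<times> nat \<Rightarrow> complex"
  assumes "\<And>i k. T (i, k) \<noteq> 0 \<Longrightarrow> i \<le> NA \<and> m - i + int k \<le> NB"
  shows "(\<Sum>i\<in>{m - NB..NA}. \<Sum>k\<in>{0..nat (NA + NB - m)}. T (i, k)) = Sum_any T"
proof -
  have "Sum_any T = sum T ({m - NB..NA} \<times> {0..nat (NA + NB - m)})"
  proof (rule SA_box)
    fix x assume x: "x \<notin> {m - NB..NA} \<times> {0..nat (NA + NB - m)}"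
    obtain i k where ik: "x = (i, k)" by force
    show "T x = 0"
    proof (rule ccontr)
      assume "T x \<noteq> 0"
      then have "i \<le> NA \<and> m - i + int k \<le> NB" using assms ik by blast
      then have "x \<in> {m - NB..NA} \<times> {0..nat (NA + NB - m)}" using ik by auto
      then show False using x by blast
    qed
  qed simp
  then show ?thesis by (simp add: sum.cartesian_product)
qed

lemma mul_SA:
  assumes "is_mdo A" "is_mdo B"
  shows "cm_mul A B m p = Sum_any (mterm A B m p)"
proof -
  have bA: "bnd A (cm_ub A)" and bB: "bnd B (cm_ub B)" using assms ub_bnd by auto
  show ?thesis
    unfolding cm_mul_def
    apply (subst box_SA[of "mterm A B m p" "cm_ub A" m "cm_ub B", symmetric])
    subgoal for i k using nzA[OF bA] nzD[OF bB] by (fastforce simp: mterm_def)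
    by (simp add: mterm_def)
qed

lemma mul_box:
  assumes "bnd A NA" "bnd B NB" "is_mdo A" "is_mdo B"
  shows "cm_mul A B m p = (\<Sum>i\<in>{m - NB..NA}. \<Sum>k\<in>{0..nat (NA + NB - m)}. mterm A B m p (i, k))"
  unfolding mul_SA[OF assms(3,4)]
  apply (subst box_SA[of "mterm A B m p" NA m NB])
  subgoal for i k using nzA[OF assms(1)] nzD[OF assms(2)] by (fastforce simp: mterm_def)
  by simp

lemma mul_bnd:
  assumes "bnd A NA" "bnd B NB" "is_mdo A" "is_mdo B"
  shows "bnd (cm_mul A B) (NA + NB)"
  unfolding bnd_def using mul_box[OF assms] by (auto intro!: ext)

lemma mul_top:
  assumes "bnd A NA" "bnd B NB" "is_mdo A" "is_mdo B"
  shows "cm_mul A B (NA + NB) p = A NA p * B NB p"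
  using mul_box[OF assms, of "NA + NB" p] by (simp add: mterm_def)

lemma mul_is_mdo: "is_mdo A \<Longrightarrow> is_mdo B \<Longrightarrow> is_mdo (cm_mul A B)"
  using mul_bnd ub_bnd is_mdo_bnd by blast

lemma mul_smooth:
  assumes "good A" "good B"
  shows "cm_smooth (cm_mul A B m)"
proof -
  have eq: "cm_mul A B m = (\<lambda>p. \<Sum>i\<in>{m - cm_ub B..cm_ub A}. \<Sum>k\<in>{0..nat (cm_ub A + cm_ub B - m)}.
       ((of_int i :: complex) gchoose k) * A i p * Dx k (B (m - i + int k)) p)"
    unfolding cm_mul_def by simp
  have "cm_smooth (\<lambda>p. \<Sum>i\<in>{m - cm_ub B..cm_ub A}. \<Sum>k\<in>{0..nat (cm_ub A + cm_ub B - m)}.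
       ((of_int i :: complex) gchoose k) * A i p * Dx k (B (m - i + int k)) p)" using assms unfolding good_def
    by (intro smooth_sum smooth_mult smooth_const smooth_Dx) auto
  then show ?thesis using eq by simp
qed

lemma mul_good: "good A \<Longrightarrow> good B \<Longrightarrow> good (cm_mul A B)"
  using mul_smooth mul_is_mdo good_def by blast


definition Psi :: "mdo \<Rightarrow> mdo \<Rightarrow> mdo \<Rightarrow> int \<Rightarrow> (nat \<Rightarrow> real) \<Rightarrow> int \<times> nat \<times> int \<times> nat \<Rightarrow> complex" where
  "Psi A B C m p = (\<lambda>(i, a, j, l). ((of_int i :: complex) gchoose a) * ((of_int (i + j - int a) :: complex) gchoose l)
     * A i p * Dx a (B j) p * Dx l (C (m - i - j + int a + int l)) p)"

lemma assoc_L: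
  assumes "good A" "good B" "good C"
  shows "cm_mul (cm_mul A B) C m p = Sum_any (Psi A B C m p)"
proof -
  define NA where "NA = cm_ub A"
  define NB where "NB = cm_ub B"
  define NC where "NC = cm_ub C"
  have bA: "bnd A NA" and bB: "bnd B NB" and bC: "bnd C NC" and mA: "is_mdo A" and mB: "is_mdo B" and mC: "is_mdo C"
    using assms ub_bnd good_def NA_def NB_def NC_def by auto
  have mAB: "is_mdo (cm_mul A B)" using mA mB mul_is_mdo by blast
  define F1 :: "int \<times> nat \<Rightarrow> int \<times> nat \<Rightarrow> complex" where
    "F1 = (\<lambda>(r, l) (i, k). ((of_int r :: complex) gchoose l) * (((of_int i :: complex) gchoose k) * A i p * Dx k (B (r - i + int k)) p)
           * Dx l (C (m - r + int l)) p)"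
  have e1: "cm_mul (cm_mul A B) C m p = Sum_any (\<lambda>rl. Sum_any (F1 rl))"
  proof -
    have "mterm (cm_mul A B) C m p rl = Sum_any (F1 rl)" for rl
    proof -
      obtain r l where rl: "rl = (r, l)" by force
      have "mterm (cm_mul A B) C m p rl = ((of_int r :: complex) gchoose l) * Sum_any (mterm A B r p) * Dx l (C (m - r + int l)) p"
        using rl mul_SA[OF mA mB] by (simp add: mterm_def)
      also have "\<dots> = Sum_any (\<lambda>ik. ((of_int r :: complex) gchoose l) * mterm A B r p ik * Dx l (C (m - r + int l)) p)"
        by (simp add: SA_cmult SA_multc)
      also have "\<dots> = Sum_any (F1 rl)"
        by (rule Sum_any.cong) (auto simp: F1_def mterm_def rl)
      finally show ?thesis .
    qed
    then show ?thesis using mul_SA[OF mAB mC] by simp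
  qed
  define K where "K = nat (NA + NB + NC - m)"
  define X where "X = ({m - NC..NA + NB} \<times> {0..K}) \<times> ({m - NB - NC..NA} \<times> {0..K})"
  have e2: "Sum_any (\<lambda>rl. Sum_any (F1 rl)) = Sum_any (\<lambda>(rl, ik). F1 rl ik)"
  proof (rule SA_nest)
    show "finite X" unfolding X_def by simp
    fix rl ik assume nz: "F1 rl ik \<noteq> 0"
    obtain r l i k where rl: "rl = (r, l)" and ik: "ik = (i, k)" by force
    have h1: "i \<le> NA" using nz nzA[OF bA] unfolding F1_def rl ik by fastforce
    have h2: "r - i + int k \<le> NB" using nz nzD[OF bB] unfolding F1_def rl ik by fastforce
    have h3: "m - r + int l \<le> NC" using nz nzD[OF bC] unfolding F1_def rl ik by fastforce
    show "(rl, ik) \<in> X" unfolding X_def rl ik K_def using h1 h2 h3 by auto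
  qed
  define h :: "int \<times> nat \<times> int \<times> nat \<Rightarrow> (int \<times> nat) \<times> (int \<times> nat)" where
    "h = (\<lambda>(i, k, j, l). ((i + j - int k, l), (i, k)))"
  define hi :: "(int \<times> nat) \<times> (int \<times> nat) \<Rightarrow> int \<times> nat \<times> int \<times> nat" where
    "hi = (\<lambda>((r, l), (i, k)). (i, k, r - i + int k, l))"
  have bij: "bij h"
    by (rule o_bij[of hi]) (auto simp: h_def hi_def fun_eq_iff)
  have e3: "Sum_any (\<lambda>(rl, ik). F1 rl ik) = Sum_any (Psi A B C m p)"
  proof (rule Sum_any.reindex_cong[OF bij])
    show "(\<lambda>(rl, ik). F1 rl ik) \<circ> h = Psi A B C m p"
    proof (rule ext)
      fix x :: "int \<times> nat \<times> int \<times> nat"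
      obtain i k j l where x: "x = (i, k, j, l)" by (cases x) auto
      have i1: "i + j - int k - i + int k = j" by simp
      have i2: "m - (i + j - int k) + int l = m - i - j + int k + int l" by simp
      show "((\<lambda>(rl, ik). F1 rl ik) \<circ> h) x = Psi A B C m p x"
        unfolding x h_def F1_def Psi_def by (simp add: i1 i2 algebra_simps)
    qed
  qed
  show ?thesis using e1 e2 e3 by simp
qed

lemma Dx_term:
  assumes "cm_smooth f" "cm_smooth g"
  shows "Dx k (\<lambda>p. c * f p * Dx q g p) p = c * Sum_any (\<lambda>a. of_nat (k choose a) * Dx a f p * Dx (k - a + q) g p)"
proof -
  have "Dx k (\<lambda>p. c * f p * Dx q g p) = Dx k (\<lambda>p. c * (f p * Dx q g p))" by (simp add: mult.assoc)
  also have "\<dots> = (\<lambda>p. c * Dx k (\<lambda>p. f p * Dx q g p) p)"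
    using assms by (intro Dx_cmult smooth_mult smooth_Dx)
  finally have "Dx k (\<lambda>p. c * f p * Dx q g p) p = c * (\<Sum>a\<le>k. of_nat (k choose a) * Dx a f p * Dx (k - a) (Dx q g) p)"
    using Dx_mult[of f "Dx q g" k] assms by (simp add: smooth_Dx)
  also have "\<dots> = c * (\<Sum>a\<le>k. of_nat (k choose a) * Dx a f p * Dx (k - a + q) g p)"
  proof -
    have "Dx (k - a + q) g = Dx (k - a) (Dx q g)" for a by (simp only: funpow_add o_apply)
    then show ?thesis by (simp only:)
  qed
  also have "\<dots> = c * Sum_any (\<lambda>a. of_nat (k choose a) * Dx a f p * Dx (k - a + q) g p)"
    by (subst SA_atMost) auto
  finally show ?thesis .
qed

lemma Dx_mulcoef:
  assumes "good B" "good C"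
  shows "Dx k (cm_mul B C n) p = Sum_any (\<lambda>(j, q). ((of_int j :: complex) gchoose q) *
     Sum_any (\<lambda>a. of_nat (k choose a) * Dx a (B j) p * Dx (k - a + q) (C (n - j + int q)) p))"
proof -
  define NB where "NB = cm_ub B"
  define NC where "NC = cm_ub C"
  have bB: "bnd B NB" and bC: "bnd C NC" and sB: "\<And>j. cm_smooth (B j)" and sC: "\<And>j. cm_smooth (C j)"
    using assms ub_bnd good_def NB_def NC_def by auto
  have eq: "cm_mul B C n = (\<lambda>p. \<Sum>j\<in>{n - NC..NB}. \<Sum>q\<in>{0..nat (NB + NC - n)}.
       ((of_int j :: complex) gchoose q) * B j p * Dx q (C (n - j + int q)) p)"
    unfolding cm_mul_def NB_def NC_def by simp
  have "Dx k (cm_mul B C n) p = (\<Sum>j\<in>{n - NC..NB}. \<Sum>q\<in>{0..nat (NB + NC - n)}.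
       Dx k (\<lambda>p. ((of_int j :: complex) gchoose q) * B j p * Dx q (C (n - j + int q)) p) p)"
    unfolding eq using sB sC
    by (simp add: Dx_sum smooth_sum smooth_mult smooth_Dx)
  also have "\<dots> = (\<Sum>j\<in>{n - NC..NB}. \<Sum>q\<in>{0..nat (NB + NC - n)}.
       (\<lambda>(j, q). ((of_int j :: complex) gchoose q) *
     Sum_any (\<lambda>a. of_nat (k choose a) * Dx a (B j) p * Dx (k - a + q) (C (n - j + int q)) p)) (j, q))"
    by (simp add: Dx_term sB sC)
  also have "\<dots> = Sum_any (\<lambda>(j, q). ((of_int j :: complex) gchoose q) *
     Sum_any (\<lambda>a. of_nat (k choose a) * Dx a (B j) p * Dx (k - a + q) (C (n - j + int q)) p))"
  proof (rule box_SA)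
    fix j q assume "(\<lambda>(j, q). ((of_int j :: complex) gchoose q) *
     Sum_any (\<lambda>a. of_nat (k choose a) * Dx a (B j) p * Dx (k - a + q) (C (n - j + int q)) p)) (j, q) \<noteq> 0"
    then have "Sum_any (\<lambda>a. of_nat (k choose a) * Dx a (B j) p * Dx (k - a + q) (C (n - j + int q)) p) \<noteq> 0"
      by auto
    then obtain a where "of_nat (k choose a) * Dx a (B j) p * Dx (k - a + q) (C (n - j + int q)) p \<noteq> 0"
      by (rule Sum_any.not_neutral_obtains_not_neutral)
    then show "j \<le> NB \<and> n - j + int q \<le> NC"
      using nzD[OF bB] nzD[OF bC] by fastforce
  qed
  finally show ?thesis .
qed

lemma vdm_core:
  fixes i :: int and j :: int
  shows "(\<Sum>t\<le>l. ((of_int i :: complex) gchoose (a + t)) * of_nat ((a + t) choose a) * ((of_int j :: complex) gchoose (l - t)))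
        = ((of_int i :: complex) gchoose a) * ((of_int (i + j - int a) :: complex) gchoose l)"
proof -
  have "((of_int i :: complex) gchoose (a + t)) * of_nat ((a + t) choose a)
        = ((of_int i :: complex) gchoose a) * ((of_int i - of_nat a :: complex) gchoose t)" for t
    using gbinomial_trinomial_revision[of a "a + t" "of_int i :: complex"]
    by (simp add: binomial_gbinomial)
  then have "(\<Sum>t\<le>l. ((of_int i :: complex) gchoose (a + t)) * of_nat ((a + t) choose a) * ((of_int j :: complex) gchoose (l - t)))
     = ((of_int i :: complex) gchoose a) * (\<Sum>t\<in>{0..l}. ((of_int i - of_nat a :: complex) gchoose t) * ((of_int j :: complex) gchoose (l - t)))"
    by (simp add: sum_distrib_left mult.assoc atLeast0AtMost)
  also have "\<dots> = ((of_int i :: complex) gchoose a) * ((of_int i - of_nat a + of_int j :: complex) gchoose l)"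
    by (simp only: gbinomial_Vandermonde)
  finally show ?thesis by (simp add: algebra_simps)
qed

lemma assoc_R:
  assumes "good A" "good B" "good C"
  shows "cm_mul A (cm_mul B C) m p = Sum_any (Psi A B C m p)"
proof -
  define NA where "NA = cm_ub A"
  define NB where "NB = cm_ub B"
  define NC where "NC = cm_ub C"
  have bA: "bnd A NA" and bB: "bnd B NB" and bC: "bnd C NC" and mA: "is_mdo A" and mB: "is_mdo B" and mC: "is_mdo C"
    using assms ub_bnd good_def NA_def NB_def NC_def by auto
  have mBC: "is_mdo (cm_mul B C)" using mB mC mul_is_mdo by blast
  define F2 :: "int \<times> nat \<Rightarrow> (int \<times> nat) \<times> nat \<Rightarrow> complex" where
    "F2 = (\<lambda>(i, k) ((j, q), a). ((of_int i :: complex) gchoose k) * A i p * (((of_int j :: complex) gchoose q) *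
       (of_nat (k choose a) * Dx a (B j) p * Dx (k - a + q) (C (m - i + int k - j + int q)) p)))"
  have e1: "cm_mul A (cm_mul B C) m p = Sum_any (\<lambda>ik. Sum_any (F2 ik))"
  proof -
    have "mterm A (cm_mul B C) m p ik = Sum_any (F2 ik)" for ik
    proof -
      obtain i k where ik: "ik = (i, k)" by force
      have "mterm A (cm_mul B C) m p ik = ((of_int i :: complex) gchoose k) * A i p *
          Sum_any (\<lambda>(j, q). ((of_int j :: complex) gchoose q) *
          Sum_any (\<lambda>a. of_nat (k choose a) * Dx a (B j) p * Dx (k - a + q) (C (m - i + int k - j + int q)) p))"
        using ik Dx_mulcoef[OF assms(2,3)] by (simp add: mterm_def)
      also have "\<dots> = Sum_any (\<lambda>jq. Sum_any (\<lambda>a. F2 ik (jq, a)))"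
        by (simp add: SA_cmult[symmetric] F2_def ik case_prod_beta)
      also have "\<dots> = Sum_any (\<lambda>(jq, a). F2 ik (jq, a))"
      proof (rule SA_nest)
        show "finite (({m - i + int k - NC..NB} \<times> {0..nat (NC - m + i + NB)}) \<times> {0..k})" by simp
        fix jq a assume nz: "F2 ik (jq, a) \<noteq> 0"
        obtain j q where jq: "jq = (j, q)" by force
        have h1: "j \<le> NB" using nz nzD[OF bB] unfolding F2_def ik jq by fastforce
        have h2: "m - i + int k - j + int q \<le> NC" using nz nzD[OF bC] unfolding F2_def ik jq by fastforce
        have h3: "a \<le> k" using nz unfolding F2_def ik jq by (cases "a \<le> k") auto
        show "(jq, a) \<in> ({m - i + int k - NC..NB} \<times> {0..nat (NC - m + i + NB)}) \<times> {0..k}"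
          unfolding jq using h1 h2 h3 by auto
      qed
      also have "\<dots> = Sum_any (F2 ik)" by (simp add: case_prod_beta')
      finally show ?thesis .
    qed
    then show ?thesis using mul_SA[OF mA mBC] by simp
  qed
  define K where "K = nat (NA + NB + NC - m)"
  have e2: "Sum_any (\<lambda>ik. Sum_any (F2 ik)) = Sum_any (\<lambda>(ik, x). F2 ik x)"
  proof (rule SA_nest)
    show "finite (({m - NB - NC..NA} \<times> {0..K}) \<times> (({m - NA - NC..NB} \<times> {0..K}) \<times> {0..K}))" by simp
    fix ik x assume nz: "F2 ik x \<noteq> 0"
    obtain i k j q a where ik: "ik = (i, k)" and x: "x = ((j, q), a)" by (metis surj_pair)
    have h0: "i \<le> NA" using nz nzA[OF bA] unfolding F2_def ik x by fastforce
    have h1: "j \<le> NB" using nz nzD[OF bB] unfolding F2_def ik x by fastforce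
    have h2: "m - i + int k - j + int q \<le> NC" using nz nzD[OF bC] unfolding F2_def ik x by fastforce
    have h3: "a \<le> k" using nz unfolding F2_def ik x by (cases "a \<le> k") auto
    show "(ik, x) \<in> ({m - NB - NC..NA} \<times> {0..K}) \<times> (({m - NA - NC..NB} \<times> {0..K}) \<times> {0..K})"
      unfolding ik x K_def using h0 h1 h2 h3 by auto
  qed
  define h1 :: "int \<times> nat \<times> nat \<times> int \<times> nat \<Rightarrow> (int \<times> nat) \<times> (int \<times> nat) \<times> nat" where
    "h1 = (\<lambda>(i, a, t, j, q). ((i, a + t), ((j, q), a)))"
  define G where "G = (\<lambda>(ik, x). F2 ik x) \<circ> h1"
  have e3: "Sum_any (\<lambda>(ik, x). F2 ik x) = Sum_any G"
    unfolding G_def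
  proof (rule SA_inj)
    show "inj h1" unfolding h1_def inj_def by auto
    fix y assume y: "y \<notin> range h1"
    obtain i k j q a where yy: "y = ((i, k), ((j, q), a))" by (metis surj_pair)
    have "\<not> a \<le> k"
    proof
      assume "a \<le> k"
      then have "y = h1 (i, a, k - a, j, q)" unfolding yy h1_def by simp
      then show False using y by blast
    qed
    then show "(\<lambda>(ik, x). F2 ik x) y = 0" unfolding yy F2_def by simp
  qed
  define W :: "(int \<times> nat \<times> int \<times> nat) \<times> nat \<Rightarrow> complex" where
    "W = (\<lambda>((i, a, j, l), t). if t \<le> l then G (i, a, t, j, l - t) else 0)"
  define h2 :: "int \<times> nat \<times> nat \<times> int \<times> nat \<Rightarrow> (int \<times> nat \<times> int \<times> nat) \<times> nat" where
    "h2 = (\<lambda>(i, a, t, j, q). ((i, a, j, t + q), t))"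
  have e4: "Sum_any W = Sum_any G"
  proof -
    have "Sum_any W = Sum_any (W \<circ> h2)"
    proof (rule SA_inj)
      show "inj h2" unfolding h2_def inj_def by auto
      fix y assume y: "y \<notin> range h2"
      obtain i a j l t where yy: "y = ((i, a, j, l), t)" by (metis surj_pair)
      have "\<not> t \<le> l"
      proof
        assume "t \<le> l"
        then have "y = h2 (i, a, t, j, l - t)" unfolding yy h2_def by simp
        then show False using y by blast
      qed
      then show "W y = 0" unfolding yy W_def by simp
    qed
    also have "W \<circ> h2 = G" unfolding W_def h2_def by (auto simp: fun_eq_iff)
    finally show ?thesis .
  qed
  have e5: "Sum_any W = Sum_any (\<lambda>x. Sum_any (\<lambda>t. W (x, t)))"
  proof (rule SA_nest[symmetric, where g = "\<lambda>x t. W (x, t)", simplified case_prod_beta' prod.collapse])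
    show "finite (({m - NB - NC..NA} \<times> {0..K} \<times> {m - NA - NC..NB} \<times> {0..K}) \<times> {0..K})" by simp
    fix x t assume nz: "W (x, t) \<noteq> 0"
    obtain i a j l where x: "x = (i, a, j, l)" by (metis surj_pair)
    have tl: "t \<le> l" using nz unfolding W_def x by (cases "t \<le> l") auto
    have nz2: "G (i, a, t, j, l - t) \<noteq> 0" using nz tl unfolding W_def x by simp
    have h0: "i \<le> NA" using nz2 nzA[OF bA] unfolding G_def F2_def h1_def by fastforce
    have h1': "j \<le> NB" using nz2 nzD[OF bB] unfolding G_def F2_def h1_def by fastforce
    have h2': "m - i + int (a + t) - j + int (l - t) \<le> NC" using nz2 nzD[OF bC] unfolding G_def F2_def h1_def by fastforce
    show "(x, t) \<in> ({m - NB - NC..NA} \<times> {0..K} \<times> {m - NA - NC..NB} \<times> {0..K}) \<times> {0..K}"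
      unfolding x K_def using h0 h1' h2' tl by auto
  qed
  have e6: "Sum_any (\<lambda>t. W (x, t)) = Psi A B C m p x" for x
  proof -
    obtain i a j l where x: "x = (i, a, j, l)" by (metis surj_pair)
    define Q where "Q = A i p * Dx a (B j) p * Dx l (C (m - i - j + int a + int l)) p"
    have "Sum_any (\<lambda>t. W (x, t)) = (\<Sum>t\<le>l. W (x, t))"
      by (rule SA_atMost[symmetric]) (simp add: W_def x)
    also have "\<dots> = (\<Sum>t\<le>l. ((of_int i :: complex) gchoose (a + t)) * of_nat ((a + t) choose a) * ((of_int j :: complex) gchoose (l - t)) * Q)"
    proof (rule sum.cong[OF refl])
      fix t assume "t \<in> {..l}"
      then have tl: "t \<le> l" by simp
      have i1: "a + t - a + (l - t) = l" using tl by simp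
      have i2: "m - i + int (a + t) - j + int (l - t) = m - i - j + int a + int l" using tl by simp
      show "W (x, t) = ((of_int i :: complex) gchoose (a + t)) * of_nat ((a + t) choose a) * ((of_int j :: complex) gchoose (l - t)) * Q"
        unfolding W_def x G_def F2_def h1_def Q_def using tl by (simp add: i1 i2 algebra_simps)
    qed
    also have "\<dots> = ((of_int i :: complex) gchoose a) * ((of_int (i + j - int a) :: complex) gchoose l) * Q"
      by (simp add: sum_distrib_right[symmetric] vdm_core)
    also have "\<dots> = Psi A B C m p x" unfolding Psi_def x Q_def by (simp add: algebra_simps)
    finally show ?thesis .
  qed
  show ?thesis using e1 e2 e3 e4 e5 e6 by simp
qed

lemma mul_assoc:
  assumes "good A" "good B" "good C"
  shows "cm_mul (cm_mul A B) C = cm_mul A (cm_mul B C)"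
  using assoc_L[OF assms] assoc_R[OF assms] by (intro ext) simp


lemma const_bnd: "bnd (cm_const c) 0"
  unfolding bnd_def cm_const_def by auto

lemma const_mdo: "is_mdo (cm_const c)"
  using const_bnd is_mdo_bnd by blast

lemma const_good: "cm_smooth c \<Longrightarrow> good (cm_const c)"
  unfolding good_def cm_const_def using const_mdo[of c] by (auto simp: cm_const_def)

lemma one_good: "good cm_one"
  unfolding cm_one_def by (rule const_good) simp

lemma add_bnd: "bnd A N \<Longrightarrow> bnd B N \<Longrightarrow> bnd (cm_add A B) N"
  unfolding bnd_def cm_add_def by auto

lemma sub_bnd: "bnd A N \<Longrightarrow> bnd B N \<Longrightarrow> bnd (cm_sub A B) N"
  unfolding bnd_def cm_sub_def by auto

lemma bnd_max: "bnd A N \<Longrightarrow> bnd A (max N M)" "bnd A N \<Longrightarrow> bnd A (max M N)"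
  unfolding bnd_def by auto

lemma good_bnd: "good A \<Longrightarrow> \<exists>N. bnd A N"
  unfolding good_def is_mdo_bnd by blast

lemma good_bnd2: "good A \<Longrightarrow> good B \<Longrightarrow> \<exists>N. bnd A N \<and> bnd B N"
proof -
  assume a: "good A" "good B"
  obtain N1 where n1: "bnd A N1" using good_bnd[OF a(1)] by (elim exE)
  obtain N2 where n2: "bnd B N2" using good_bnd[OF a(2)] by (elim exE)
  have "bnd A (max N1 N2)" by (rule bnd_mono[OF n1]) simp
  moreover have "bnd B (max N1 N2)" by (rule bnd_mono[OF n2]) simp
  ultimately show ?thesis by (intro exI conjI)
qed

lemma good_bnd3: "good A \<Longrightarrow> good B \<Longrightarrow> good C \<Longrightarrow> \<exists>N. bnd A N \<and> bnd B N \<and> bnd C N"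
proof -
  assume a: "good A" "good B" "good C"
  obtain N1 where n1: "bnd A N1" using good_bnd[OF a(1)] by (elim exE)
  obtain N2 where n2: "bnd B N2" using good_bnd[OF a(2)] by (elim exE)
  obtain N3 where n3: "bnd C N3" using good_bnd[OF a(3)] by (elim exE)
  have "bnd A (max N1 (max N2 N3))" by (rule bnd_mono[OF n1]) simp
  moreover have "bnd B (max N1 (max N2 N3))" by (rule bnd_mono[OF n2]) simp
  moreover have "bnd C (max N1 (max N2 N3))" by (rule bnd_mono[OF n3]) simp
  ultimately show ?thesis by (intro exI conjI)
qed

lemma add_good: "good A \<Longrightarrow> good B \<Longrightarrow> good (cm_add A B)"
proof -
  assume a: "good A" "good B"
  then obtain N where "bnd A N" "bnd B N" using good_bnd2[OF a] by (elim exE conjE)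
  then have "bnd (cm_add A B) N" by (rule add_bnd)
  moreover have "cm_smooth (cm_add A B m)" for m
    using a unfolding good_def cm_add_def by (auto intro!: smooth_add)
  ultimately show ?thesis unfolding good_def is_mdo_bnd by blast
qed

lemma sub_good: "good A \<Longrightarrow> good B \<Longrightarrow> good (cm_sub A B)"
proof -
  assume a: "good A" "good B"
  then obtain N where "bnd A N" "bnd B N" using good_bnd2[OF a] by (elim exE conjE)
  then have "bnd (cm_sub A B) N" by (rule sub_bnd)
  moreover have "cm_smooth (cm_sub A B m)" for m
    using a unfolding good_def cm_sub_def by (auto intro!: smooth_diff)
  ultimately show ?thesis unfolding good_def is_mdo_bnd by blast
qed

definition cm_neg :: "mdo \<Rightarrow> mdo" where "cm_neg A = (\<lambda>m p. - A m p)"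

lemma neg_good: "good A \<Longrightarrow> good (cm_neg A)"
proof -
  assume a: "good A"
  then obtain N where N: "bnd A N" using good_bnd[OF a] by (elim exE)
  then have "bnd (cm_neg A) N" unfolding bnd_def cm_neg_def by simp
  moreover have "cm_smooth (cm_neg A m)" for m
    using a unfolding good_def cm_neg_def by (auto intro!: smooth_neg)
  ultimately show ?thesis unfolding good_def is_mdo_bnd by blast
qed

lemma zero_good: "good (\<lambda>m p. 0)"
  unfolding good_def is_mdo_bnd bnd_def by auto

lemma mul_const_left:
  assumes "is_mdo B"
  shows "cm_mul (cm_const c) B = (\<lambda>m p. c p * B m p)"
proof (intro ext)
  fix m p
  have "mterm (cm_const c) B m p = (\<lambda>x. if x = (0, 0) then c p * B m p else 0)"
  proof
    fix x :: "int \<times> nat"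
    obtain i k where x: "x = (i, k)" by force
    show "mterm (cm_const c) B m p x = (if x = (0, 0) then c p * B m p else 0)"
      unfolding x mterm_def cm_const_def by (cases k) auto
  qed
  then show "cm_mul (cm_const c) B m p = c p * B m p"
    using mul_SA[OF const_mdo assms] by simp
qed

lemma mul_one_left: "is_mdo B \<Longrightarrow> cm_mul cm_one B = B"
  unfolding cm_one_def by (simp add: mul_const_left)

lemma mul_one_right:
  assumes "is_mdo A"
  shows "cm_mul A cm_one = A"
proof (intro ext)
  fix m p
  have "mterm A cm_one m p = (\<lambda>x. if x = (m, 0) then A m p else 0)"
  proof
    fix x :: "int \<times> nat"
    obtain i k where x: "x = (i, k)" by force
    show "mterm A cm_one m p x = (if x = (m, 0) then A m p else 0)"
    proof (cases "k = 0")
      case True then show ?thesis unfolding x mterm_def cm_one_def cm_const_def by auto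
    next
      case False
      then have "Dx k (\<lambda>p. 1) = (\<lambda>p. 0)" by (simp add: Dx_const)
      then show ?thesis using False unfolding x mterm_def cm_one_def cm_const_def by auto
    qed
  qed
  then show "cm_mul A cm_one m p = A m p"
    using mul_SA[OF assms const_mdo[of "\<lambda>p. 1"]] by (simp add: cm_one_def)
qed

lemma mul_const_const: "cm_mul (cm_const f) (cm_const g) = cm_const (\<lambda>p. f p * g p)"
  by (simp add: mul_const_left const_mdo) (auto simp: cm_const_def)

lemma mul_add_left:
  assumes "good A" "good A'" "good B"
  shows "cm_mul (cm_add A A') B = cm_add (cm_mul A B) (cm_mul A' B)"
proof (intro ext)
  fix m p
  obtain N where N: "bnd A N" "bnd A' N" "bnd B N" using good_bnd3[OF assms] by (elim exE conjE)
  have m: "is_mdo A" "is_mdo A'" "is_mdo B" "is_mdo (cm_add A A')" using assms add_good good_def by auto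
  have t: "mterm (cm_add A A') B m p x = mterm A B m p x + mterm A' B m p x" for x
    by (cases x) (simp add: mterm_def cm_add_def algebra_simps)
  show "cm_mul (cm_add A A') B m p = cm_add (cm_mul A B) (cm_mul A' B) m p"
    unfolding cm_add_def[of "cm_mul A B"]
    unfolding mul_box[OF add_bnd[OF N(1,2)] N(3) m(4,3)] mul_box[OF N(1,3) m(1,3)] mul_box[OF N(2,3) m(2,3)]
    by (simp only: t sum.distrib)
qed

lemma mul_sub_left:
  assumes "good A" "good A'" "good B"
  shows "cm_mul (cm_sub A A') B = cm_sub (cm_mul A B) (cm_mul A' B)"
proof (intro ext)
  fix m p
  obtain N where N: "bnd A N" "bnd A' N" "bnd B N" using good_bnd3[OF assms] by (elim exE conjE)
  have m: "is_mdo A" "is_mdo A'" "is_mdo B" "is_mdo (cm_sub A A')" using assms sub_good good_def by auto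
  have t: "mterm (cm_sub A A') B m p x = mterm A B m p x - mterm A' B m p x" for x
    by (cases x) (simp add: mterm_def cm_sub_def algebra_simps)
  show "cm_mul (cm_sub A A') B m p = cm_sub (cm_mul A B) (cm_mul A' B) m p"
    unfolding cm_sub_def[of "cm_mul A B"]
    unfolding mul_box[OF sub_bnd[OF N(1,2)] N(3) m(4,3)] mul_box[OF N(1,3) m(1,3)] mul_box[OF N(2,3) m(2,3)]
    by (simp only: t sum_subtractf)
qed

lemma mul_add_right:
  assumes "good A" "good B" "good B'"
  shows "cm_mul A (cm_add B B') = cm_add (cm_mul A B) (cm_mul A B')"
proof (intro ext)
  fix m p
  obtain N where N: "bnd A N" "bnd B N" "bnd B' N" using good_bnd3[OF assms] by (elim exE conjE)
  have m: "is_mdo A" "is_mdo B" "is_mdo B'" "is_mdo (cm_add B B')" using assms add_good good_def by auto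
  have s: "cm_smooth (B j)" "cm_smooth (B' j)" for j using assms good_def by auto
  have d: "Dx k (cm_add B B' j) = (\<lambda>p. Dx k (B j) p + Dx k (B' j) p)" for k j
    unfolding cm_add_def by (rule Dx_add[OF s])
  have t: "mterm A (cm_add B B') m p x = mterm A B m p x + mterm A B' m p x" for x
    by (cases x) (simp add: mterm_def d algebra_simps)
  show "cm_mul A (cm_add B B') m p = cm_add (cm_mul A B) (cm_mul A B') m p"
    unfolding cm_add_def[of "cm_mul A B"]
    unfolding mul_box[OF N(1) add_bnd[OF N(2,3)] m(1,4)] mul_box[OF N(1,2) m(1,2)] mul_box[OF N(1,3) m(1,3)]
    by (simp only: t sum.distrib)
qed

lemma mul_sub_right:
  assumes "good A" "good B" "good B'"
  shows "cm_mul A (cm_sub B B') = cm_sub (cm_mul A B) (cm_mul A B')"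
proof (intro ext)
  fix m p
  obtain N where N: "bnd A N" "bnd B N" "bnd B' N" using good_bnd3[OF assms] by (elim exE conjE)
  have m: "is_mdo A" "is_mdo B" "is_mdo B'" "is_mdo (cm_sub B B')" using assms sub_good good_def by auto
  have s: "cm_smooth (B j)" "cm_smooth (B' j)" for j using assms good_def by auto
  have d: "Dx k (cm_sub B B' j) = (\<lambda>p. Dx k (B j) p - Dx k (B' j) p)" for k j
    unfolding cm_sub_def by (rule Dx_diff[OF s])
  have t: "mterm A (cm_sub B B') m p x = mterm A B m p x - mterm A B' m p x" for x
    by (cases x) (simp add: mterm_def d algebra_simps)
  show "cm_mul A (cm_sub B B') m p = cm_sub (cm_mul A B) (cm_mul A B') m p"
    unfolding cm_sub_def[of "cm_mul A B"]
    unfolding mul_box[OF N(1) sub_bnd[OF N(2,3)] m(1,4)] mul_box[OF N(1,2) m(1,2)] mul_box[OF N(1,3) m(1,3)]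
    by (simp only: t sum_subtractf)
qed

lemma mul_zero_right:
  assumes "is_mdo A"
  shows "cm_mul A (\<lambda>m p. 0) = (\<lambda>m p. 0)"
  using mul_SA[of A "\<lambda>m p. 0"] assms zero_good good_def by (auto simp: mterm_def)

lemma mul_zero_left:
  assumes "is_mdo A"
  shows "cm_mul (\<lambda>m p. 0) A = (\<lambda>m p. 0)"
  using mul_SA[of "\<lambda>m p. 0" A] assms zero_good good_def by (auto simp: mterm_def)

lemma mul_neg_left:
  assumes "good A" "good B"
  shows "cm_mul (cm_neg A) B = cm_neg (cm_mul A B)"
proof -
  have "cm_neg A = cm_sub (\<lambda>m p. 0) A" unfolding cm_neg_def cm_sub_def by simp
  then have "cm_mul (cm_neg A) B = cm_sub (cm_mul (\<lambda>m p. 0) B) (cm_mul A B)"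
    using mul_sub_left[OF zero_good assms(1,2)] by simp
  also have "\<dots> = cm_neg (cm_mul A B)"
    using mul_zero_left[of B] assms good_def by (simp add: cm_sub_def cm_neg_def)
  finally show ?thesis .
qed


lemma dop_bnd: "bnd A N \<Longrightarrow> bnd (cm_dop n A) N"
  unfolding bnd_def cm_dop_def by simp

lemma dop_good: "good A \<Longrightarrow> good (cm_dop n A)"
proof -
  assume a: "good A"
  then obtain N where N: "bnd A N" using good_bnd[OF a] by (elim exE)
  then have "bnd (cm_dop n A) N" by (rule dop_bnd)
  moreover have "cm_smooth (cm_dop n A m)" for m
    using a unfolding good_def cm_dop_def by (auto intro!: smooth_pd)
  ultimately show ?thesis unfolding good_def is_mdo_bnd by blast
qed

lemma pd_mterm:
  assumes "good A" "good B"
  shows "cm_pd n (\<lambda>p. mterm A B m p x) = (\<lambda>p. mterm (cm_dop n A) B m p x + mterm A (cm_dop n B) m p x)"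
proof -
  obtain i k where x: "x = (i, k)" by force
  have sA: "cm_smooth (A i)" and sB: "cm_smooth (B (m - i + int k))" using assms good_def by auto
  have "cm_pd n (\<lambda>p. mterm A B m p x) = cm_pd n (\<lambda>p. ((of_int i :: complex) gchoose k) * (A i p * Dx k (B (m - i + int k)) p))"
    unfolding x mterm_def by (simp add: mult.assoc)
  also have "\<dots> = (\<lambda>p. ((of_int i :: complex) gchoose k) * cm_pd n (\<lambda>p. A i p * Dx k (B (m - i + int k)) p) p)"
    using sA sB by (intro pd_cmult smooth_ld smooth_mult smooth_Dx)
  also have "\<dots> = (\<lambda>p. ((of_int i :: complex) gchoose k) * (A i p * cm_pd n (Dx k (B (m - i + int k))) p
        + cm_pd n (A i) p * Dx k (B (m - i + int k)) p))"
    using sA sB by (simp add: pd_mult smooth_ld smooth_Dx)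
  also have "\<dots> = (\<lambda>p. mterm (cm_dop n A) B m p x + mterm A (cm_dop n B) m p x)"
    unfolding x mterm_def cm_dop_def using sB by (simp add: pd_Dx_comm algebra_simps)
  finally show ?thesis .
qed

lemma mterm_smooth: "good A \<Longrightarrow> good B \<Longrightarrow> cm_smooth (\<lambda>p. mterm A B m p x)"
  unfolding mterm_def good_def by (cases x) (auto intro!: smooth_mult smooth_Dx)

lemma mul_box_fun:
  assumes "bnd A NA" "bnd B NB" "is_mdo A" "is_mdo B"
  shows "cm_mul A B m = (\<lambda>p. \<Sum>i\<in>{m - NB..NA}. \<Sum>k\<in>{0..nat (NA + NB - m)}. mterm A B m p (i, k))"
  using mul_box[OF assms] by (intro ext) simp

lemma dop_mul:
  assumes "good A" "good B"
  shows "cm_dop n (cm_mul A B) = cm_add (cm_mul (cm_dop n A) B) (cm_mul A (cm_dop n B))"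
proof (intro ext)
  fix m p
  obtain N where N: "bnd A N" "bnd B N" using good_bnd2[OF assms] by (elim exE conjE)
  have N': "bnd (cm_dop n A) N" "bnd (cm_dop n B) N" using N dop_bnd by auto
  have mm: "is_mdo A" "is_mdo B" "is_mdo (cm_dop n A)" "is_mdo (cm_dop n B)"
    using assms dop_good good_def by auto
  have "cm_dop n (cm_mul A B) m = cm_pd n (\<lambda>p. \<Sum>i\<in>{m - N..N}. \<Sum>k\<in>{0..nat (N + N - m)}. mterm A B m p (i, k))"
    unfolding cm_dop_def mul_box_fun[OF N mm(1,2)] ..
  also have "\<dots> = (\<lambda>p. \<Sum>i\<in>{m - N..N}. \<Sum>k\<in>{0..nat (N + N - m)}. cm_pd n (\<lambda>p. mterm A B m p (i, k)) p)"
    using mterm_smooth[OF assms] by (simp add: pd_sum smooth_sum)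
  also have "\<dots> = (\<lambda>p. \<Sum>i\<in>{m - N..N}. \<Sum>k\<in>{0..nat (N + N - m)}. mterm (cm_dop n A) B m p (i, k) + mterm A (cm_dop n B) m p (i, k))"
    by (simp only: pd_mterm[OF assms])
  also have "\<dots> = cm_add (cm_mul (cm_dop n A) B) (cm_mul A (cm_dop n B)) m"
    unfolding cm_add_def mul_box_fun[OF N'(1) N(2) mm(3,2)] mul_box_fun[OF N(1) N'(2) mm(1,4)]
    by (simp add: sum.distrib)
  finally show "cm_dop n (cm_mul A B) m p = cm_add (cm_mul (cm_dop n A) B) (cm_mul A (cm_dop n B)) m p" by simp
qed

lemma dop_add: "good A \<Longrightarrow> good B \<Longrightarrow> cm_dop n (cm_add A B) = cm_add (cm_dop n A) (cm_dop n B)"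
  unfolding cm_dop_def cm_add_def good_def by (simp add: pd_add smooth_ld)

lemma dop_sub: "good A \<Longrightarrow> good B \<Longrightarrow> cm_dop n (cm_sub A B) = cm_sub (cm_dop n A) (cm_dop n B)"
proof -
  assume a: "good A" "good B"
  have "cm_pd n (\<lambda>p. A m p - B m p) = (\<lambda>p. cm_pd n (A m) p - cm_pd n (B m) p)" for m
    using pd_add[of "A m" "\<lambda>p. - B m p" n] pd_neg[of "B m" n] a
    by (simp add: good_def smooth_ld smooth_neg)
  then show ?thesis unfolding cm_dop_def cm_sub_def by simp
qed

lemma dop_neg: "good A \<Longrightarrow> cm_dop n (cm_neg A) = cm_neg (cm_dop n A)"
  unfolding cm_dop_def cm_neg_def good_def by (simp add: pd_neg smooth_ld)

lemma dop_const: "cm_dop n (cm_const c) = cm_const (cm_pd n c)"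
  unfolding cm_dop_def cm_const_def by (intro ext) simp

lemma dop_zero: "cm_dop n (\<lambda>m p. 0) = (\<lambda>m p. 0)"
  unfolding cm_dop_def by simp

lemma dop_one: "cm_dop n cm_one = (\<lambda>m p. 0)"
  unfolding cm_one_def dop_const by (simp add: cm_const_def)

lemma proj_bnd: "bnd A N \<Longrightarrow> bnd (cm_proj A) N"
  unfolding bnd_def cm_proj_def by simp

lemma proj_good: "good A \<Longrightarrow> good (cm_proj A)"
proof -
  assume a: "good A"
  then obtain N where N: "bnd A N" using good_bnd[OF a] by (elim exE)
  then have "bnd (cm_proj A) N" by (rule proj_bnd)
  moreover have "cm_smooth (cm_proj A m)" for m
    using a unfolding good_def cm_proj_def by auto
  ultimately show ?thesis unfolding good_def is_mdo_bnd by blast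
qed

lemma proj_add: "cm_proj (cm_add A B) = cm_add (cm_proj A) (cm_proj B)"
  unfolding cm_proj_def cm_add_def by (intro ext) auto

lemma proj_sub: "cm_proj (cm_sub A B) = cm_sub (cm_proj A) (cm_proj B)"
  unfolding cm_proj_def cm_sub_def by (intro ext) auto

lemma proj_const: "cm_proj (cm_const c) = cm_const c"
  unfolding cm_proj_def cm_const_def by (intro ext) auto

lemma proj_mul_const_left: "is_mdo A \<Longrightarrow> cm_proj (cm_mul (cm_const f) A) = cm_mul (cm_const f) (cm_proj A)"
proof -
  assume a: "is_mdo A"
  have "is_mdo (cm_proj A)" using a proj_bnd is_mdo_bnd by blast
  then show ?thesis using a by (simp add: mul_const_left) (auto simp: cm_proj_def)
qed

lemma gchoose_int_big:
  assumes "0 \<le> i" "int k > i"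
  shows "((of_int i :: complex) gchoose k) = 0"
proof -
  have "(of_int i :: complex) = of_nat (nat i)" using assms(1) by simp
  moreover have "nat i choose k = 0" using assms by simp
  ultimately show ?thesis by (metis binomial_gbinomial of_nat_0)
qed

lemma proj_mul_const_right:
  assumes "is_mdo A"
  shows "cm_proj (cm_mul A (cm_const g)) = cm_mul (cm_proj A) (cm_const g)"
proof (intro ext)
  fix m p
  have mP: "is_mdo (cm_proj A)" using assms proj_bnd is_mdo_bnd by blast
  have t: "mterm (cm_proj A) (cm_const g) m p x = (if m \<ge> 0 then mterm A (cm_const g) m p x else 0)" for x
  proof -
    obtain i k where x: "x = (i, k)" by force
    show ?thesis
    proof (cases "m - i + int k = 0")
      case False
      then show ?thesis unfolding x mterm_def cm_const_def by simp
    next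
      case True
      then have ik: "i = m + int k" by simp
      show ?thesis
      proof (cases "m \<ge> 0")
        case True then show ?thesis unfolding x mterm_def cm_proj_def using ik by simp
      next
        case False
        show ?thesis
        proof (cases "i \<ge> 0")
          case True
          then have "((of_int i :: complex) gchoose k) = 0" using False ik by (intro gchoose_int_big) auto
          then show ?thesis unfolding x mterm_def by simp
        next
          case False2: False
          then show ?thesis using False unfolding x mterm_def cm_proj_def by simp
        qed
      qed
    qed
  qed
  show "cm_proj (cm_mul A (cm_const g)) m p = cm_mul (cm_proj A) (cm_const g) m p"
    unfolding mul_SA[OF mP const_mdo] t
    by (cases "m \<ge> 0") (simp_all add: cm_proj_def mul_SA[OF assms const_mdo])
qed


typedef G = "{A::mdo. good A}" morphisms Rep Abs
  by (rule exI[of _ cm_one]) (simp add: one_good)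

lemma Rep_good: "good (Rep a)" using Rep by simp

lemma Abs_inv: "good A \<Longrightarrow> Rep (Abs A) = A" by (simp add: Abs_inverse)

instantiation G :: ring_1
begin
definition zero_G_def: "0 = Abs (\<lambda>m p. 0)"
definition one_G_def: "1 = Abs cm_one"
definition plus_G_def: "a + b = Abs (cm_add (Rep a) (Rep b))"
definition minus_G_def: "a - b = Abs (cm_sub (Rep a) (Rep b))"
definition uminus_G_def: "- a = Abs (cm_neg (Rep a))"
definition times_G_def: "a * b = Abs (cm_mul (Rep a) (Rep b))"

lemma Rep_zero: "Rep (0::G) = (\<lambda>m p. 0)" unfolding zero_G_def by (simp add: Abs_inv zero_good)
lemma Rep_one: "Rep (1::G) = cm_one" unfolding one_G_def by (simp add: Abs_inv one_good)
lemma Rep_plus: "Rep (a + b) = cm_add (Rep a) (Rep b)" unfolding plus_G_def by (simp add: Abs_inv add_good Rep_good)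
lemma Rep_minus: "Rep (a - b) = cm_sub (Rep a) (Rep b)" unfolding minus_G_def by (simp add: Abs_inv sub_good Rep_good)
lemma Rep_uminus: "Rep (- a) = cm_neg (Rep a)" unfolding uminus_G_def by (simp add: Abs_inv neg_good Rep_good)
lemma Rep_times: "Rep (a * b) = cm_mul (Rep a) (Rep b)" unfolding times_G_def by (simp add: Abs_inv mul_good Rep_good)

instance
proof
  fix a b c :: G
  show "a + b + c = a + (b + c)" by (rule Rep_inject[THEN iffD1]) (simp add: Rep_plus cm_add_def add.assoc)
  show "a + b = b + a" by (rule Rep_inject[THEN iffD1]) (simp add: Rep_plus cm_add_def add.commute)
  show "0 + a = a" by (rule Rep_inject[THEN iffD1]) (simp add: Rep_plus Rep_zero cm_add_def)
  show "- a + a = 0" by (rule Rep_inject[THEN iffD1]) (simp add: Rep_plus Rep_zero Rep_uminus cm_add_def cm_neg_def)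
  show "a - b = a + - b" by (rule Rep_inject[THEN iffD1]) (simp add: Rep_plus Rep_minus Rep_uminus cm_add_def cm_neg_def cm_sub_def)
  show "a * b * c = a * (b * c)" by (rule Rep_inject[THEN iffD1]) (simp add: Rep_times mul_assoc Rep_good)
  show "(a + b) * c = a * c + b * c" by (rule Rep_inject[THEN iffD1]) (simp add: Rep_times Rep_plus mul_add_left Rep_good)
  show "a * (b + c) = a * b + a * c" by (rule Rep_inject[THEN iffD1]) (simp add: Rep_times Rep_plus mul_add_right Rep_good)
  show "1 * a = a" by (rule Rep_inject[THEN iffD1]) (simp add: Rep_times Rep_one mul_one_left Rep_good[unfolded good_def])
  show "a * 1 = a" by (rule Rep_inject[THEN iffD1]) (simp add: Rep_times Rep_one mul_one_right Rep_good[unfolded good_def])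
  show "(0::G) \<noteq> 1"
  proof
    assume "(0::G) = 1"
    then have "Rep (0::G) 0 = Rep (1::G) 0" by simp
    then have "(\<lambda>p::nat\<Rightarrow>real. 0::complex) = (\<lambda>p. 1)" by (simp add: Rep_zero Rep_one cm_one_def cm_const_def)
    then show False by (metis zero_neq_one)
  qed
qed
end

definition cG :: "coef \<Rightarrow> G" where "cG c = Abs (cm_const c)"

lemma Rep_cG: "cm_smooth c \<Longrightarrow> Rep (cG c) = cm_const c"
  unfolding cG_def by (simp add: Abs_inv const_good)

lemma cG_mult: "cm_smooth f \<Longrightarrow> cm_smooth g \<Longrightarrow> cG f * cG g = cG (\<lambda>p. f p * g p)"
  by (rule Rep_inject[THEN iffD1]) (simp add: Rep_times Rep_cG mul_const_const smooth_mult)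

lemma cG_comm: "cm_smooth f \<Longrightarrow> cm_smooth g \<Longrightarrow> cG f * cG g = cG g * cG f"
  by (simp add: cG_mult mult.commute)

lemma cG_one: "cG (\<lambda>p. 1) = 1"
  by (rule Rep_inject[THEN iffD1]) (simp add: Rep_cG Rep_one cm_one_def)

lemma cG_add: "cm_smooth f \<Longrightarrow> cm_smooth g \<Longrightarrow> cG f + cG g = cG (\<lambda>p. f p + g p)"
  by (rule Rep_inject[THEN iffD1]) (auto simp: Rep_plus Rep_cG smooth_add cm_add_def cm_const_def)

lemma cG_diff: "cm_smooth f \<Longrightarrow> cm_smooth g \<Longrightarrow> cG f - cG g = cG (\<lambda>p. f p - g p)"
  by (rule Rep_inject[THEN iffD1]) (auto simp: Rep_minus Rep_cG smooth_diff cm_sub_def cm_const_def)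

lemma Rep_pow: "cm_pow (Rep a) n = Rep (a ^ n)"
  by (induction n) (simp_all add: Rep_one Rep_times)

definition dG :: "nat \<Rightarrow> G \<Rightarrow> G" where "dG n a = Abs (cm_dop n (Rep a))"

lemma Rep_dG: "Rep (dG n a) = cm_dop n (Rep a)"
  unfolding dG_def by (simp add: Abs_inv dop_good Rep_good)

lemma dG_mult: "dG n (a * b) = dG n a * b + a * dG n b"
  by (rule Rep_inject[THEN iffD1]) (simp add: Rep_dG Rep_times Rep_plus dop_mul Rep_good)

lemma dG_add: "dG n (a + b) = dG n a + dG n b"
  by (rule Rep_inject[THEN iffD1]) (simp add: Rep_dG Rep_plus dop_add Rep_good)

lemma dG_diff: "dG n (a - b) = dG n a - dG n b"
  by (rule Rep_inject[THEN iffD1]) (simp add: Rep_dG Rep_minus dop_sub Rep_good)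

lemma dG_cG: "cm_smooth c \<Longrightarrow> dG n (cG c) = cG (cm_pd n c)"
  by (rule Rep_inject[THEN iffD1]) (simp add: Rep_dG Rep_cG dop_const smooth_pd)

lemma dG_one: "dG n 1 = 0"
  by (rule Rep_inject[THEN iffD1]) (simp add: Rep_dG Rep_one Rep_zero dop_one)

definition pG :: "G \<Rightarrow> G" where "pG a = Abs (cm_proj (Rep a))"

lemma Rep_pG: "Rep (pG a) = cm_proj (Rep a)"
  unfolding pG_def by (simp add: Abs_inv proj_good Rep_good)

lemma pG_diff: "pG (a - b) = pG a - pG b"
  by (rule Rep_inject[THEN iffD1]) (simp add: Rep_pG Rep_minus proj_sub)

lemma pG_cG: "cm_smooth c \<Longrightarrow> pG (cG c) = cG c"
  by (rule Rep_inject[THEN iffD1]) (simp add: Rep_pG Rep_cG proj_const)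

lemma pG_conj: "cm_smooth f \<Longrightarrow> cm_smooth g \<Longrightarrow> pG (cG f * a * cG g) = cG f * pG a * cG g"
  by (rule Rep_inject[THEN iffD1])
    (simp add: Rep_pG Rep_times Rep_cG proj_mul_const_right proj_mul_const_left mul_is_mdo const_mdo
       Rep_good[unfolded good_def] proj_good[OF Rep_good, unfolded good_def])


lemma mdo_bnd2: "is_mdo A \<Longrightarrow> is_mdo B \<Longrightarrow> \<exists>N. bnd A N \<and> bnd B N"
proof -
  assume a: "is_mdo A" "is_mdo B"
  obtain N1 where n1: "bnd A N1" using a(1) is_mdo_bnd by blast
  obtain N2 where n2: "bnd B N2" using a(2) is_mdo_bnd by blast
  have "bnd A (max N1 N2)" by (rule bnd_mono[OF n1]) simp
  moreover have "bnd B (max N1 N2)" by (rule bnd_mono[OF n2]) simp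
  ultimately show ?thesis by (intro exI conjI)
qed

lemma mdo_bnd3: "is_mdo A \<Longrightarrow> is_mdo B \<Longrightarrow> is_mdo C \<Longrightarrow> \<exists>N. bnd A N \<and> bnd B N \<and> bnd C N"
proof -
  assume a: "is_mdo A" "is_mdo B" "is_mdo C"
  obtain N1 where n1: "bnd A N1" using a(1) is_mdo_bnd by blast
  obtain N2 where n2: "bnd B N2" using a(2) is_mdo_bnd by blast
  obtain N3 where n3: "bnd C N3" using a(3) is_mdo_bnd by blast
  have "bnd A (max N1 (max N2 N3))" by (rule bnd_mono[OF n1]) simp
  moreover have "bnd B (max N1 (max N2 N3))" by (rule bnd_mono[OF n2]) simp
  moreover have "bnd C (max N1 (max N2 N3))" by (rule bnd_mono[OF n3]) simp
  ultimately show ?thesis by (intro exI conjI)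
qed

lemma add_mdo: "is_mdo A \<Longrightarrow> is_mdo B \<Longrightarrow> is_mdo (cm_add A B)"
  using mdo_bnd2 add_bnd is_mdo_bnd by metis

lemma sub_mdo: "is_mdo A \<Longrightarrow> is_mdo B \<Longrightarrow> is_mdo (cm_sub A B)"
  using mdo_bnd2 sub_bnd is_mdo_bnd by metis

lemma mul_add_left_mdo:
  assumes "is_mdo A" "is_mdo A'" "is_mdo B"
  shows "cm_mul (cm_add A A') B = cm_add (cm_mul A B) (cm_mul A' B)"
proof (intro ext)
  fix m p
  obtain N where N: "bnd A N" "bnd A' N" "bnd B N" using mdo_bnd3[OF assms] by (elim exE conjE)
  have m: "is_mdo A" "is_mdo A'" "is_mdo B" "is_mdo (cm_add A A')" using assms add_mdo by auto
  have t: "mterm (cm_add A A') B m p x = mterm A B m p x + mterm A' B m p x" for x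
    by (cases x) (simp add: mterm_def cm_add_def algebra_simps)
  show "cm_mul (cm_add A A') B m p = cm_add (cm_mul A B) (cm_mul A' B) m p"
    unfolding cm_add_def[of "cm_mul A B"]
    unfolding mul_box[OF add_bnd[OF N(1,2)] N(3) m(4,3)] mul_box[OF N(1,3) m(1,3)] mul_box[OF N(2,3) m(2,3)]
    by (simp only: t sum.distrib)
qed

lemma mul_sub_left_mdo:
  assumes "is_mdo A" "is_mdo A'" "is_mdo B"
  shows "cm_mul (cm_sub A A') B = cm_sub (cm_mul A B) (cm_mul A' B)"
proof (intro ext)
  fix m p
  obtain N where N: "bnd A N" "bnd A' N" "bnd B N" using mdo_bnd3[OF assms] by (elim exE conjE)
  have m: "is_mdo A" "is_mdo A'" "is_mdo B" "is_mdo (cm_sub A A')" using assms sub_mdo by auto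
  have t: "mterm (cm_sub A A') B m p x = mterm A B m p x - mterm A' B m p x" for x
    by (cases x) (simp add: mterm_def cm_sub_def algebra_simps)
  show "cm_mul (cm_sub A A') B m p = cm_sub (cm_mul A B) (cm_mul A' B) m p"
    unfolding cm_sub_def[of "cm_mul A B"]
    unfolding mul_box[OF sub_bnd[OF N(1,2)] N(3) m(4,3)] mul_box[OF N(1,3) m(1,3)] mul_box[OF N(2,3) m(2,3)]
    by (simp only: t sum_subtractf)
qed

lemma mul_local_left:
  assumes "bnd X N" "is_mdo X" "is_mdo Y" "is_mdo Y'" "\<And>i. i \<ge> m - N \<Longrightarrow> Y i = Y' i"
  shows "cm_mul Y X m p = cm_mul Y' X m p"
proof -
  have "mterm Y X m p x = mterm Y' X m p x" for x
  proof -
    obtain i k where x: "x = (i, k)" by force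
    show ?thesis
    proof (cases "i \<ge> m - N")
      case True then show ?thesis using assms(5) unfolding x mterm_def by simp
    next
      case False
      then have "Dx k (X (m - i + int k)) p = 0" using bnd_zero[OF assms(1)] by (simp add: bnd_def assms(1)[unfolded bnd_def])
      then show ?thesis unfolding x mterm_def by simp
    qed
  qed
  then show ?thesis using mul_SA[OF assms(3,2)] mul_SA[OF assms(4,2)] by simp
qed

definition mono1 :: "int \<Rightarrow> coef \<Rightarrow> mdo" where
  "mono1 i0 v = (\<lambda>i. if i = i0 then v else (\<lambda>p. 0))"

lemma mono1_bnd: "bnd (mono1 i0 v) i0"
  unfolding bnd_def mono1_def by auto

lemma mono1_good: "cm_smooth v \<Longrightarrow> good (mono1 i0 v)"
  unfolding good_def is_mdo_bnd using mono1_bnd by (auto simp: mono1_def)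

primrec ysq :: "mdo \<Rightarrow> int \<Rightarrow> nat \<Rightarrow> mdo" where
  "ysq X N 0 = (\<lambda>i p. 0)"
| "ysq X N (Suc r) = cm_add (ysq X N r)
     (mono1 (- N - int r) (\<lambda>p. ((if r = 0 then 1 else 0) - cm_mul (ysq X N r) X (- int r) p) / X N p))"

lemma ysq_props:
  assumes "good X" "\<And>p. X N p \<noteq> 0"
  shows "good (ysq X N r) \<and> bnd (ysq X N r) (- N) \<and> (\<forall>i. i \<le> - N - int r \<longrightarrow> ysq X N r i = (\<lambda>p. 0))"
proof (induction r)
  case 0 then show ?case using zero_good by (simp add: bnd_def)
next
  case (Suc r)
  define v where "v = (\<lambda>p. ((if r = 0 then 1 else 0) - cm_mul (ysq X N r) X (- int r) p) / X N p)"
  have sv: "cm_smooth v" unfolding v_def using Suc.IH assms(1)[unfolded good_def] assms(1,2)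
    by (intro smooth_div smooth_diff smooth_const mul_smooth) auto
  have eq: "ysq X N (Suc r) = cm_add (ysq X N r) (mono1 (- N - int r) v)" by (simp add: v_def)
  have g: "good (ysq X N (Suc r))" unfolding eq using Suc.IH sv by (intro add_good mono1_good) auto
  have b: "bnd (ysq X N (Suc r)) (- N)" unfolding eq
    by (rule add_bnd) (use Suc.IH in auto, rule bnd_mono[OF mono1_bnd], simp)
  have z: "\<forall>i. i \<le> - N - int (Suc r) \<longrightarrow> ysq X N (Suc r) i = (\<lambda>p. 0)"
    using Suc.IH unfolding eq by (auto simp: cm_add_def mono1_def)
  show ?case using g b z by blast
qed

lemma ysq_Suc_other: "i \<noteq> - N - int r \<Longrightarrow> ysq X N (Suc r) i = ysq X N r i"
  by (simp add: cm_add_def mono1_def)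

lemma ysq_stable: "r \<le> r' \<Longrightarrow> i > - N - int r \<Longrightarrow> ysq X N r' i = ysq X N r i"
proof (induction r' rule: dec_induct)
  case base then show ?case by simp
next
  case (step r') then show ?case using ysq_Suc_other[of i N r' X] by simp
qed

definition yinv :: "mdo \<Rightarrow> int \<Rightarrow> mdo" where
  "yinv X N = (\<lambda>i. ysq X N (Suc (nat (- N - i))) i)"

lemma yinv_eq: "i > - N - int r \<Longrightarrow> yinv X N i = ysq X N r i"
proof -
  assume a: "i > - N - int r"
  define r0 where "r0 = Suc (nat (- N - i))"
  have a0: "i > - N - int r0" unfolding r0_def by simp
  have "ysq X N (max r r0) i = ysq X N r i" by (rule ysq_stable) (use a in auto)
  moreover have "ysq X N (max r r0) i = ysq X N r0 i" by (rule ysq_stable) (use a0 in auto)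
  ultimately show ?thesis unfolding yinv_def r0_def by simp
qed

lemma left_inv_exists:
  assumes "good X" "bnd X N" "\<And>p. X N p \<noteq> 0"
  shows "\<exists>Y. good Y \<and> bnd Y (- N) \<and> (\<forall>p. Y (- N) p \<noteq> 0) \<and> cm_mul Y X = cm_one"
proof (intro exI conjI)
  let ?Y = "yinv X N"
  have P: "good (ysq X N r)" "bnd (ysq X N r) (- N)" for r using ysq_props[OF assms(1,3)] by auto
  have b: "bnd ?Y (- N)"
    unfolding bnd_def
  proof (intro allI impI)
    fix i assume "i > - N"
    then have "?Y i = ysq X N 0 i" by (intro yinv_eq) simp
    then show "?Y i = (\<lambda>p. 0)" by simp
  qed
  show "bnd ?Y (- N)" by (rule b)
  have s: "cm_smooth (?Y i)" for i using P(1) unfolding yinv_def good_def by blast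
  show g: "good ?Y" unfolding good_def is_mdo_bnd using b s by blast
  have mX: "is_mdo X" using assms good_def by auto
  have m0: "cm_mul (ysq X N 0) X = (\<lambda>m p. 0)" using mul_zero_left[OF mX] by simp
  have top: "?Y (- N) = ysq X N 1 (- N)" by (rule yinv_eq) simp
  show "\<forall>p. ?Y (- N) p \<noteq> 0" using assms(3) unfolding top by (simp add: cm_add_def mono1_def mul_zero_left[OF mX])
  show "cm_mul ?Y X = cm_one"
  proof (intro ext)
    fix m p
    show "cm_mul ?Y X m p = cm_one m p"
    proof (cases "m > 0")
      case True
      have "bnd (cm_mul ?Y X) (- N + N)" using mul_bnd[OF b assms(2)] g mX good_def by auto
      then show ?thesis using True by (simp add: bnd_def cm_one_def cm_const_def)
    next
      case False
      define r where "r = nat (- m)"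
      have mr: "m = - int r" unfolding r_def using False by simp
      define v where "v = (\<lambda>p. ((if r = 0 then 1 else 0) - cm_mul (ysq X N r) X (- int r) p) / X N p)"
      have sv: "cm_smooth v" unfolding v_def using P assms(1)[unfolded good_def] assms
        by (intro smooth_div smooth_diff smooth_const mul_smooth) auto
      have eq: "ysq X N (Suc r) = cm_add (ysq X N r) (mono1 (- N - int r) v)" by (simp add: v_def)
      have mm: "is_mdo (ysq X N r)" "is_mdo (mono1 (- N - int r) v)" "is_mdo (ysq X N (Suc r))"
        using P(1)[of r] P(1)[of "Suc r"] mono1_good[OF sv] unfolding good_def by blast+
      have "cm_mul ?Y X m p = cm_mul (ysq X N (Suc r)) X m p"
        by (rule mul_local_left[OF assms(2) mX good_def[THEN iffD1, OF g, THEN conjunct1] mm(3)])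
           (rule yinv_eq, simp add: mr)
      also have "\<dots> = cm_mul (ysq X N r) X m p + cm_mul (mono1 (- N - int r) v) X m p"
        unfolding eq mul_add_left_mdo[OF mm(1,2) mX] by (simp add: cm_add_def)
      also have "cm_mul (mono1 (- N - int r) v) X m p = v p * X N p"
        using mul_top[OF mono1_bnd assms(2) mm(2) mX, of p] by (simp add: mr mono1_def)
      also have "v p * X N p = (if r = 0 then 1 else 0) - cm_mul (ysq X N r) X m p"
        using assms(3)[of p] by (simp add: v_def mr)
      finally show ?thesis by (simp add: cm_one_def cm_const_def mr)
    qed
  qed
qed


lemma two_sided_inv:
  assumes "good X" "bnd X N" "\<And>p. X N p \<noteq> 0"
  shows "\<exists>Y. good Y \<and> bnd Y (- N) \<and> (\<forall>p. Y (- N) p \<noteq> 0) \<and> cm_mul Y X = cm_one \<and> cm_mul X Y = cm_one"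
proof -
  obtain Y where Y: "good Y" "bnd Y (- N)" "\<forall>p. Y (- N) p \<noteq> 0" "cm_mul Y X = cm_one"
    using left_inv_exists[OF assms] by blast
  obtain Z where Z: "good Z" "bnd Z (- (- N))" "\<forall>p. Z (- (- N)) p \<noteq> 0" "cm_mul Z Y = cm_one"
    using left_inv_exists[OF Y(1,2)] Y(3) by blast
  have yx: "Abs Y * Abs X = 1" using Y assms(1)
    by (intro Rep_inject[THEN iffD1]) (simp add: Rep_times Abs_inv Rep_one)
  have zy: "Abs Z * Abs Y = 1" using Y Z
    by (intro Rep_inject[THEN iffD1]) (simp add: Rep_times Abs_inv Rep_one)
  have "Abs Z = Abs Z * (Abs Y * Abs X)" using yx by simp
  also have "\<dots> = Abs X" using zy by (simp add: mult.assoc[symmetric])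
  finally have "Abs X * Abs Y = 1" using zy by simp
  then have "cm_mul X Y = cm_one"
    using Y(1) assms(1) by (metis Abs_inv Rep_one Rep_times)
  then show ?thesis using Y by blast
qed

lemma exists_top:
  assumes "is_mdo D" "D m0 p0 \<noteq> 0"
  shows "\<exists>T. bnd D T \<and> (\<exists>p. D T p \<noteq> 0)"
proof -
  obtain M where M: "bnd D M" using assms(1) is_mdo_bnd by blast
  define S where "S = {i \<in> {m0..M}. \<exists>p. D i p \<noteq> 0}"
  have m0M: "m0 \<le> M" using assms(2) nzA[OF M] by blast
  have fS: "finite S" unfolding S_def by (rule finite_subset[of _ "{m0..M}"]) auto
  have m0S: "m0 \<in> S" unfolding S_def using assms(2) m0M by auto
  define T where "T = Max S"
  have TS: "T \<in> S" unfolding T_def using fS m0S by (intro Max_in) auto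
  have Tge: "T \<ge> m0" unfolding T_def using fS m0S by simp
  have "bnd D T" unfolding bnd_def
  proof (intro allI impI)
    fix i assume i: "i > T"
    show "D i = (\<lambda>p. 0)"
    proof (cases "i \<le> M")
      case True
      have "i \<notin> S" using i fS T_def Max_ge leD by blast
      then show ?thesis using True i Tge unfolding S_def by auto
    next
      case False then show ?thesis using M unfolding bnd_def by simp
    qed
  qed
  then show ?thesis using TS unfolding S_def by blast
qed

lemma left_inv_unique:
  assumes "good X" "bnd X N" "\<And>p. X N p \<noteq> 0"
    and "is_mdo B" "is_mdo B'" "cm_mul B X = cm_one" "cm_mul B' X = cm_one"
  shows "B = B'"
proof (rule ccontr)
  assume ne: "B \<noteq> B'"
  define D where "D = cm_sub B B'"
  have mX: "is_mdo X" using assms(1) good_def by auto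
  have mD: "is_mdo D" unfolding D_def using assms(4,5) sub_mdo by blast
  have DX: "cm_mul D X = (\<lambda>m p. 0)"
    unfolding D_def mul_sub_left_mdo[OF assms(4,5) mX] assms(6,7) by (simp add: cm_sub_def)
  obtain m0 p0 where "B m0 p0 \<noteq> B' m0 p0" using ne by (meson ext)
  then have "D m0 p0 \<noteq> 0" unfolding D_def cm_sub_def by simp
  then obtain T p where T: "bnd D T" "D T p \<noteq> 0" using exists_top[OF mD] by blast
  have "cm_mul D X (T + N) p = D T p * X N p" by (rule mul_top[OF T(1) assms(2) mD mX])
  then have "D T p * X N p = 0" using DX by simp
  then show False using T(2) assms(3)[of p] by simp
qed

lemma inv_char:
  assumes "good X" "bnd X N" "\<And>p. X N p \<noteq> 0" "good Y" "cm_mul Y X = cm_one" "cm_mul X Y = cm_one"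
  shows "cm_inv X = Y"
  unfolding cm_inv_def
proof (rule the_equality)
  show "is_mdo Y \<and> cm_mul Y X = cm_one \<and> cm_mul X Y = cm_one" using assms good_def by auto
  fix B assume "is_mdo B \<and> cm_mul B X = cm_one \<and> cm_mul X B = cm_one"
  then show "B = Y" using left_inv_unique[OF assms(1,2,3), of B Y] assms good_def by auto
qed

definition okQ :: "(int \<Rightarrow> mdo) \<Rightarrow> bool" where
  "okQ Q \<longleftrightarrow> (\<forall>s. good (Q s) \<and> bnd (Q s) 1 \<and> (\<forall>p. Q s 1 p \<noteq> 0))"

lemma inv_props:
  assumes "okQ Q"
  shows "good (cm_inv (Q s)) \<and> bnd (cm_inv (Q s)) (-1) \<and> (\<forall>p. cm_inv (Q s) (-1) p \<noteq> 0)
     \<and> cm_mul (cm_inv (Q s)) (Q s) = cm_one \<and> cm_mul (Q s) (cm_inv (Q s)) = cm_one"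
proof -
  have q: "good (Q s)" "bnd (Q s) 1" "\<And>p. Q s 1 p \<noteq> 0" using assms okQ_def by auto
  obtain Y where Y: "good Y" "bnd Y (- 1)" "\<forall>p. Y (- 1) p \<noteq> 0" "cm_mul Y (Q s) = cm_one" "cm_mul (Q s) Y = cm_one"
    using two_sided_inv[OF q] by blast
  have "cm_inv (Q s) = Y" by (rule inv_char[OF q Y(1,4,5)])
  then show ?thesis using Y by simp
qed

lemma Pup_props:
  assumes "okQ Q"
  shows "good (cm_Pup Q s j) \<and> bnd (cm_Pup Q s j) (int j) \<and> (\<forall>p. cm_Pup Q s j (int j) p \<noteq> 0)"
proof (induction j)
  case 0 then show ?case using one_good const_bnd by (simp add: cm_one_def cm_const_def)
next
  case (Suc j)
  have q: "good (Q (s + int j))" "bnd (Q (s + int j)) 1" "\<And>p. Q (s + int j) 1 p \<noteq> 0" using assms okQ_def by auto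
  have m: "is_mdo (Q (s + int j))" "is_mdo (cm_Pup Q s j)" using q Suc.IH good_def by auto
  have g: "good (cm_Pup Q s (Suc j))" using q Suc.IH by (simp add: mul_good)
  have b: "bnd (cm_Pup Q s (Suc j)) (1 + int j)" using mul_bnd[OF q(2) _ m] Suc.IH by simp
  have t: "cm_Pup Q s (Suc j) (1 + int j) p = Q (s + int j) 1 p * cm_Pup Q s j (int j) p" for p
    using mul_top[OF q(2) _ m] Suc.IH by simp
  show ?case using g b t q(3) Suc.IH by (simp add: add.commute)
qed

lemma Pdown_props:
  assumes "okQ Q"
  shows "good (cm_Pdown Q s j) \<and> bnd (cm_Pdown Q s j) (- int j) \<and> (\<forall>p. cm_Pdown Q s j (- int j) p \<noteq> 0)"
proof (induction j)
  case 0 then show ?case using one_good const_bnd by (simp add: cm_one_def cm_const_def)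
next
  case (Suc j)
  let ?I = "cm_inv (Q (s - int (Suc j)))"
  have q: "good ?I" "bnd ?I (-1)" "\<And>p. ?I (-1) p \<noteq> 0" using inv_props[OF assms] by auto
  have m: "is_mdo ?I" "is_mdo (cm_Pdown Q s j)" using q Suc.IH good_def by auto
  have g: "good (cm_Pdown Q s (Suc j))" using q Suc.IH by (simp add: mul_good)
  have b: "bnd (cm_mul ?I (cm_Pdown Q s j)) (-1 + - int j)" using mul_bnd[OF q(2) _ m] Suc.IH by blast
  have t: "cm_mul ?I (cm_Pdown Q s j) (-1 + - int j) p = ?I (-1) p * cm_Pdown Q s j (- int j) p" for p
    using mul_top[OF q(2) _ m] Suc.IH by blast
  have e: "- int (Suc j) = -1 + - int j" by simp
  have eq: "cm_Pdown Q s (Suc j) = cm_mul ?I (cm_Pdown Q s j)" by simp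
  show ?case unfolding eq e using g b t q(3) Suc.IH by simp
qed

lemma Pn_props:
  assumes "okQ Q"
  shows "good (cm_Pn Q s k) \<and> bnd (cm_Pn Q s k) k \<and> (\<forall>p. cm_Pn Q s k k p \<noteq> 0)"
proof (cases "k \<ge> 0")
  case True
  then show ?thesis using Pup_props[OF assms, of s "nat k"] by (simp add: cm_Pn_def)
next
  case False
  then show ?thesis using Pdown_props[OF assms, of s "nat (- k)"] by (simp add: cm_Pn_def)
qed


definition expand :: "mdo \<Rightarrow> (int \<Rightarrow> mdo) \<Rightarrow> int \<Rightarrow> nat \<Rightarrow> (nat \<Rightarrow> coef) \<Rightarrow> bool" where
  "expand X Q s n b \<longleftrightarrow> (\<forall>m. X m = (\<lambda>p. \<Sum>j\<in>{j::nat. int j \<le> int n - m}.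
              cm_mul (cm_const (b j)) (cm_Pn Q s (int n - int j)) m p))"

lemma cm_b_expand: "cm_b L P s n = (THE b. expand (cm_pow (L s) n) P s n b)"
  unfolding cm_b_def expand_def ..

lemma expand_iff:
  assumes "okQ Q"
  shows "expand X Q s n b \<longleftrightarrow> (\<forall>m p. X m p = (\<Sum>j\<in>{j::nat. int j \<le> int n - m}. b j p * cm_Pn Q s (int n - int j) m p))"
proof -
  have "cm_mul (cm_const (b j)) (cm_Pn Q s k) = (\<lambda>m p. b j p * cm_Pn Q s k m p)" for j k
    using Pn_props[OF assms, of s k] good_def by (simp add: mul_const_left)
  then show ?thesis unfolding expand_def by (auto simp: fun_eq_iff)
qed

lemma jset_le: "m \<le> int n \<Longrightarrow> {j::nat. int j \<le> int n - m} = {..nat (int n - m)}"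
  by auto

lemma jset_gt: "m > int n \<Longrightarrow> {j::nat. int j \<le> int n - m} = {}"
  by auto

lemma sum_split_last: "(\<Sum>j\<le>(J::nat). f j) = f J + (\<Sum>j<J. f j)"
  by (simp add: lessThan_Suc_atMost[symmetric] add.commute)

lemma expand_unique:
  assumes "okQ Q" "expand X Q s n b" "expand X Q s n b'"
  shows "b = b'"
proof -
  have e: "X m p = (\<Sum>j\<in>{j::nat. int j \<le> int n - m}. b j p * cm_Pn Q s (int n - int j) m p)"
          "X m p = (\<Sum>j\<in>{j::nat. int j \<le> int n - m}. b' j p * cm_Pn Q s (int n - int j) m p)" for m p
    using assms expand_iff by blast+
  have "b j = b' j" for j
  proof (induction j rule: less_induct)
    case (less j)
    show ?case
    proof
      fix p
      define m where "m = int n - int j"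
      have jm: "nat (int n - m) = j" "m \<le> int n" unfolding m_def by auto
      have "b j p * cm_Pn Q s m m p + (\<Sum>j'<j. b j' p * cm_Pn Q s (int n - int j') m p)
          = b' j p * cm_Pn Q s m m p + (\<Sum>j'<j. b' j' p * cm_Pn Q s (int n - int j') m p)"
        using e[of m p] unfolding jset_le[OF jm(2)] jm(1) sum_split_last by (simp add: m_def)
      moreover have "(\<Sum>j'<j. b j' p * cm_Pn Q s (int n - int j') m p) = (\<Sum>j'<j. b' j' p * cm_Pn Q s (int n - int j') m p)"
        using less.IH by simp
      ultimately have "b j p * cm_Pn Q s m m p = b' j p * cm_Pn Q s m m p" by simp
      moreover have "cm_Pn Q s m m p \<noteq> 0" using Pn_props[OF assms(1)] by blast
      ultimately show "b j p = b' j p" by simp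
    qed
  qed
  then show ?thesis by blast
qed

primrec bseq :: "mdo \<Rightarrow> (int \<Rightarrow> mdo) \<Rightarrow> int \<Rightarrow> nat \<Rightarrow> nat \<Rightarrow> (nat \<Rightarrow> coef)" where
  "bseq X Q s n 0 = (\<lambda>j p. 0)"
| "bseq X Q s n (Suc r) = (bseq X Q s n r)(r := (\<lambda>p. (X (int n - int r) p
      - (\<Sum>j'<r. bseq X Q s n r j' p * cm_Pn Q s (int n - int j') (int n - int r) p))
      / cm_Pn Q s (int n - int r) (int n - int r) p))"

lemma bseq_stable: "j < r \<Longrightarrow> bseq X Q s n r j = bseq X Q s n (Suc j) j"
proof (induction r)
  case 0 then show ?case by simp
next
  case (Suc r)
  show ?case
  proof (cases "j < r")
    case True then show ?thesis using Suc by (simp del: bseq.simps(2) add: bseq.simps(2)[of X Q s n r])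
  next
    case False then have "j = r" using Suc.prems by simp
    then show ?thesis by simp
  qed
qed

lemma expand_exists:
  assumes "okQ Q" "bnd X (int n)"
  shows "expand X Q s n (\<lambda>j. bseq X Q s n (Suc j) j)"
  unfolding expand_iff[OF assms(1)]
proof (intro allI)
  fix m p
  show "X m p = (\<Sum>j\<in>{j::nat. int j \<le> int n - m}. bseq X Q s n (Suc j) j p * cm_Pn Q s (int n - int j) m p)"
  proof (cases "m > int n")
    case True then show ?thesis using bnd_zero[OF assms(2)] jset_gt by simp
  next
    case False
    define J where "J = nat (int n - m)"
    have mJ: "m = int n - int J" unfolding J_def using False by simp
    have lead: "cm_Pn Q s m m p \<noteq> 0" using Pn_props[OF assms(1)] by blast
    have st: "(\<Sum>j<J. bseq X Q s n (Suc j) j p * cm_Pn Q s (int n - int j) m p)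
        = (\<Sum>j<J. bseq X Q s n J j p * cm_Pn Q s (int n - int j) m p)"
      using bseq_stable[of _ J X Q s n] by simp
    have set: "{j::nat. int j \<le> int n - m} = {..J}" unfolding J_def using False by (intro jset_le) simp
    have bJ: "bseq X Q s n (Suc J) J p = (X m p - (\<Sum>j'<J. bseq X Q s n J j' p * cm_Pn Q s (int n - int j') m p)) / cm_Pn Q s m m p"
      by (simp only: bseq.simps(2) fun_upd_same mJ)
    have "(\<Sum>j\<in>{j::nat. int j \<le> int n - m}. bseq X Q s n (Suc j) j p * cm_Pn Q s (int n - int j) m p)
       = bseq X Q s n (Suc J) J p * cm_Pn Q s (int n - int J) m p + (\<Sum>j<J. bseq X Q s n J j p * cm_Pn Q s (int n - int j) m p)"
      unfolding set sum_split_last st ..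
    also have "\<dots> = X m p" using lead unfolding bJ mJ[symmetric] by simp
    finally show ?thesis by simp
  qed
qed

lemma cm_b_char:
  assumes "okQ P" "bnd (cm_pow (L s) n) (int n)"
  shows "expand (cm_pow (L s) n) P s n (cm_b L P s n)"
proof -
  have ex: "\<exists>!b. expand (cm_pow (L s) n) P s n b"
    using expand_exists[OF assms] expand_unique[OF assms(1)] by blast
  show ?thesis unfolding cm_b_expand using theI'[OF ex] .
qed

lemma cm_b_eq:
  assumes "okQ P" "expand (cm_pow (L s) n) P s n b"
  shows "cm_b L P s n = b"
  unfolding cm_b_expand
  by (rule the_equality[where P="\<lambda>b. expand (cm_pow (L s) n) P s n b", OF assms(2)])
     (rule expand_unique[OF assms(1) _ assms(2)])

lemma mul_const_right_SA:
  assumes "is_mdo Y"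
  shows "cm_mul Y (cm_const g) m p = Sum_any (\<lambda>i. if m \<le> i then ((of_int i :: complex) gchoose nat (i - m)) * Y i p * Dx (nat (i - m)) g p else 0)"
proof -
  define h :: "int \<Rightarrow> int \<times> nat" where "h = (\<lambda>i. (i, nat (i - m)))"
  have "Sum_any (mterm Y (cm_const g) m p) = Sum_any (mterm Y (cm_const g) m p \<circ> h)"
  proof (rule SA_inj)
    show "inj h" unfolding h_def inj_def by simp
    fix x assume x: "x \<notin> range h"
    obtain i k where xx: "x = (i, k)" by force
    have "m - i + int k \<noteq> 0"
    proof
      assume "m - i + int k = 0"
      then have "x = h i" unfolding xx h_def by auto
      then show False using x by blast
    qed
    then show "mterm Y (cm_const g) m p x = 0" unfolding xx mterm_def cm_const_def by simp
  qed
  also have "mterm Y (cm_const g) m p \<circ> h = (\<lambda>i. if m \<le> i then ((of_int i :: complex) gchoose nat (i - m)) * Y i p * Dx (nat (i - m)) g p else 0)"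
    unfolding h_def mterm_def cm_const_def by (auto simp: fun_eq_iff)
  finally show ?thesis using mul_SA[OF assms const_mdo] by simp
qed

lemma X_SA:
  assumes "okQ Q" "expand X Q s n b"
  shows "X i p = Sum_any (\<lambda>j. b j p * cm_Pn Q s (int n - int j) i p)"
proof -
  have "X i p = (\<Sum>j\<in>{j::nat. int j \<le> int n - i}. b j p * cm_Pn Q s (int n - int j) i p)"
    using assms expand_iff by blast
  also have "\<dots> = Sum_any (\<lambda>j. b j p * cm_Pn Q s (int n - int j) i p)"
  proof (rule SA_box[symmetric])
    show "finite {j::nat. int j \<le> int n - i}" by (rule finite_subset[of _ "{..nat (int n - i)}"]) auto
    fix j assume "j \<notin> {j::nat. int j \<le> int n - i}"
    then have "i > int n - int j" by simp
    then show "b j p * cm_Pn Q s (int n - int j) i p = 0"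
      using Pn_props[OF assms(1)] bnd_zero by (metis mult_zero_right)
  qed
  finally show ?thesis .
qed

lemma conj_coef:
  assumes "okQ Q" "expand X Q s n b" "is_mdo X"
  shows "cm_mul X (cm_const g) m p = Sum_any (\<lambda>j. b j p * cm_mul (cm_Pn Q s (int n - int j)) (cm_const g) m p)"
proof -
  define C where "C = (\<lambda>i. ((of_int i :: complex) gchoose nat (i - m)))"
  define F where "F = (\<lambda>i j. if m \<le> i then C i * (b j p * cm_Pn Q s (int n - int j) i p) * Dx (nat (i - m)) g p else 0)"
  have "cm_mul X (cm_const g) m p = Sum_any (\<lambda>i. if m \<le> i then C i * X i p * Dx (nat (i - m)) g p else 0)"
    unfolding C_def by (rule mul_const_right_SA[OF assms(3)])
  also have "\<dots> = Sum_any (\<lambda>i. Sum_any (F i))"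
    unfolding F_def X_SA[OF assms(1,2)]
    by (rule Sum_any.cong) (simp add: SA_cmult SA_multc)
  also have "\<dots> = Sum_any (\<lambda>j. Sum_any (\<lambda>i. F i j))"
  proof (rule Sum_any.swap[of "{m..int n} \<times> {..nat (int n - m)}"])
    show "finite ({m..int n} \<times> {..nat (int n - m)})" by simp
    have "F i j \<noteq> 0 \<Longrightarrow> i \<in> {m..int n} \<and> j \<in> {..nat (int n - m)}" for i j
    proof -
      assume nz: "F i j \<noteq> 0"
      then have mi: "m \<le> i" unfolding F_def by (cases "m \<le> i") auto
      have "cm_Pn Q s (int n - int j) i p \<noteq> 0" using nz unfolding F_def by (cases "m \<le> i") auto
      then have "i \<le> int n - int j" using Pn_props[OF assms(1)] nzA by blast
      then show ?thesis using mi by auto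
    qed
    then show "{a. \<exists>b. F a b \<noteq> 0} \<times> {b. \<exists>a. F a b \<noteq> 0} \<subseteq> {m..int n} \<times> {..nat (int n - m)}" by blast
  qed
  also have "\<dots> = Sum_any (\<lambda>j. b j p * cm_mul (cm_Pn Q s (int n - int j)) (cm_const g) m p)"
  proof (rule Sum_any.cong)
    fix j
    have "cm_mul (cm_Pn Q s (int n - int j)) (cm_const g) m p = Sum_any (\<lambda>i. if m \<le> i then C i * cm_Pn Q s (int n - int j) i p * Dx (nat (i - m)) g p else 0)"
      unfolding C_def by (rule mul_const_right_SA) (use Pn_props[OF assms(1)] good_def in blast)
    then show "Sum_any (\<lambda>i. F i j) = b j p * cm_mul (cm_Pn Q s (int n - int j)) (cm_const g) m p"
      unfolding F_def by (simp add: SA_cmult[symmetric] if_distrib algebra_simps cong: if_cong)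
  qed
  finally show ?thesis .
qed


lemma Rep_conj:
  assumes "good X" "cm_smooth f" "cm_smooth g"
  shows "Rep (cG f * Abs X * cG g) m p = f p * cm_mul X (cm_const g) m p"
proof -
  have "Rep (cG f * Abs X * cG g) = cm_mul (cm_const f) (cm_mul X (cm_const g))"
    using assms mul_assoc[OF const_good[OF assms(2)] assms(1) const_good[OF assms(3)]]
    by (simp add: Rep_times Rep_cG Abs_inv)
  also have "\<dots> = (\<lambda>m p. f p * cm_mul X (cm_const g) m p)"
    using assms by (simp add: mul_const_left mul_is_mdo const_mdo good_def)
  finally show ?thesis by simp
qed

lemma rc_bnd1:
  assumes "good X" "bnd X 1" "m \<ge> 0"
  shows "cm_mul X (cm_const g) m p = (\<Sum>i\<in>{m..1}. ((of_int i :: complex) gchoose nat (i - m)) * X i p * Dx (nat (i - m)) g p)"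
proof -
  have "cm_mul X (cm_const g) m p = Sum_any (\<lambda>i. if m \<le> i then ((of_int i :: complex) gchoose nat (i - m)) * X i p * Dx (nat (i - m)) g p else 0)"
    using assms good_def by (intro mul_const_right_SA) auto
  also have "\<dots> = (\<Sum>i\<in>{m..1}. (if m \<le> i then ((of_int i :: complex) gchoose nat (i - m)) * X i p * Dx (nat (i - m)) g p else 0))"
    by (rule SA_box) (auto simp: bnd_zero[OF assms(2)])
  also have "\<dots> = (\<Sum>i\<in>{m..1}. ((of_int i :: complex) gchoose nat (i - m)) * X i p * Dx (nat (i - m)) g p)"
    by (rule sum.cong) auto
  finally show ?thesis .
qed

lemma conj_coef1:
  assumes "good X" "bnd X 1" "cm_smooth f" "cm_smooth g"
  shows "Rep (cG f * Abs X * cG g) 1 p = f p * X 1 p * g p"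
  using Rep_conj[OF assms(1,3,4)] rc_bnd1[OF assms(1,2), of 1 g p] by simp

lemma conj_coef0:
  assumes "good X" "bnd X 1" "cm_smooth f" "cm_smooth g"
  shows "Rep (cG f * Abs X * cG g) 0 p = f p * (X 0 p * g p + X 1 p * cm_pd 0 g p)"
proof -
  have s: "{0..1::int} = {0, 1}" by auto
  show ?thesis using Rep_conj[OF assms(1,3,4)] rc_bnd1[OF assms(1,2), of 0 g p] by (simp add: s)
qed

lemma conj_bnd:
  assumes "good X" "bnd X N" "cm_smooth f" "cm_smooth g"
  shows "bnd (Rep (cG f * Abs X * cG g)) N"
proof -
  have "Rep (cG f * Abs X * cG g) = cm_mul (cm_const f) (cm_mul X (cm_const g))"
    using assms mul_assoc[OF const_good[OF assms(3)] assms(1) const_good[OF assms(4)]]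
    by (simp add: Rep_times Rep_cG Abs_inv)
  moreover have "bnd (cm_mul (cm_const f) (cm_mul X (cm_const g))) (0 + (N + 0))"
    using assms good_def
    by (intro mul_bnd const_bnd mul_is_mdo const_mdo) auto
  ultimately show ?thesis by simp
qed

lemma conj_coef_neg:
  assumes "good X" "bnd X 1" "\<And>i. i < 0 \<Longrightarrow> X i = (\<lambda>p. 0)" "cm_smooth f" "cm_smooth g" "m < 0"
  shows "Rep (cG f * Abs X * cG g) m p = 0"
proof -
  have "cm_mul X (cm_const g) m p = Sum_any (\<lambda>i. if m \<le> i then ((of_int i :: complex) gchoose nat (i - m)) * X i p * Dx (nat (i - m)) g p else 0)"
    using assms good_def by (intro mul_const_right_SA) auto
  also have "\<dots> = 0"
  proof -
    have "(if m \<le> i then ((of_int i :: complex) gchoose nat (i - m)) * X i p * Dx (nat (i - m)) g p else 0) = 0" for i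
    proof (cases "i < 0")
      case True then show ?thesis using assms(3) by simp
    next
      case False
      then have "((of_int i :: complex) gchoose nat (i - m)) = 0" using assms(6) by (intro gchoose_int_big) auto
      then show ?thesis by simp
    qed
    then show ?thesis by simp
  qed
  finally show ?thesis using Rep_conj[OF assms(1,4,5)] by simp
qed

locale gauge =
  fixes e e' :: "int \<Rightarrow> coef"
  assumes se: "\<And>s. cm_smooth (e s)" and se': "\<And>s. cm_smooth (e' s)"
    and ee: "\<And>s p. e s p * e' s p = 1"
begin

definition E where "E s = cG (e s)"
definition E' where "E' s = cG (e' s)"

lemma EE': "E s * E' s = 1"
  unfolding E_def E'_def using cG_mult[OF se se'] ee cG_one by simp

lemma E'E: "E' s * E s = 1"
  unfolding E_def E'_def using cG_comm[OF se se'] EE'[unfolded E_def E'_def] by simp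

lemma conj_mult: "(E a * x * E' b) * (E b * y * E' c) = E a * (x * y) * E' c"
proof -
  have "(E a * x * E' b) * (E b * y * E' c) = E a * x * (E' b * E b) * y * E' c" by (simp add: mult.assoc)
  then show ?thesis by (simp add: E'E mult.assoc)
qed

lemma conj_pow: "(E s * x * E' s) ^ n = E s * x ^ n * E' s"
proof (induction n)
  case 0 then show ?case by (simp add: EE')
next
  case (Suc n)
  have "(E s * x * E' s) ^ Suc n = (E s * x * E' s) * (E s * x ^ n * E' s)" using Suc by simp
  also have "\<dots> = E s * (x * x ^ n) * E' s" by (rule conj_mult)
  finally show ?case by simp
qed

definition Qt :: "(int \<Rightarrow> mdo) \<Rightarrow> int \<Rightarrow> mdo" where
  "Qt Q s = Rep (E (s + 1) * Abs (Q s) * E' s)"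

lemma okQ_Qt:
  assumes "okQ Q"
  shows "okQ (Qt Q)"
  unfolding okQ_def
proof (rule allI)
  fix s
  have q: "good (Q s)" "bnd (Q s) 1" "\<And>p. Q s 1 p \<noteq> 0" using assms okQ_def by auto
  have "good (Qt Q s)" unfolding Qt_def by (rule Rep_good)
  moreover have "bnd (Qt Q s) 1" unfolding Qt_def E_def E'_def by (rule conj_bnd[OF q(1,2) se se'])
  moreover have "\<forall>p. Qt Q s 1 p \<noteq> 0"
  proof
    fix p
    have "e (s + 1) p \<noteq> 0" "e' s p \<noteq> 0" using ee by (metis mult_zero_left mult_zero_right zero_neq_one)+
    then show "Qt Q s 1 p \<noteq> 0" unfolding Qt_def E_def E'_def
      using conj_coef1[OF q(1,2) se se'] q(3)[of p] by simp
  qed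
  ultimately show "good (Qt Q s) \<and> bnd (Qt Q s) 1 \<and> (\<forall>p. Qt Q s 1 p \<noteq> 0)" by blast
qed

lemma Abs_mul: "good A \<Longrightarrow> good B \<Longrightarrow> Abs (cm_mul A B) = Abs A * Abs B"
  by (simp add: times_G_def Abs_inv)

lemma Rep_Abs_Qt: "Rep (Abs (Qt Q s)) = Qt Q s"
  unfolding Qt_def by (simp add: Rep_inverse)

lemma Abs_Rep_Qt: "Abs (Qt Q s) = E (s + 1) * Abs (Q s) * E' s"
  unfolding Qt_def by (simp add: Rep_inverse)

lemma inv_Qt:
  assumes "okQ Q"
  shows "cm_inv (Qt Q t) = Rep (E t * Abs (cm_inv (Q t)) * E' (t + 1))"
proof -
  have q: "good (Qt Q t)" "bnd (Qt Q t) 1" "\<And>p. Qt Q t 1 p \<noteq> 0" using okQ_Qt[OF assms] okQ_def by auto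
  have I: "good (cm_inv (Q t))" "cm_mul (cm_inv (Q t)) (Q t) = cm_one" "cm_mul (Q t) (cm_inv (Q t)) = cm_one"
    using inv_props[OF assms] by auto
  have Qg: "good (Q t)" using assms okQ_def by auto
  have IQ: "Abs (cm_inv (Q t)) * Abs (Q t) = 1"
    unfolding Abs_mul[OF I(1) Qg, symmetric] I(2) one_G_def ..
  have QI: "Abs (Q t) * Abs (cm_inv (Q t)) = 1"
    unfolding Abs_mul[OF Qg I(1), symmetric] I(3) one_G_def ..
  show ?thesis
  proof (rule inv_char[OF q Rep_good])
    have "(E t * Abs (cm_inv (Q t)) * E' (t + 1)) * Abs (Qt Q t) = E t * (Abs (cm_inv (Q t)) * Abs (Q t)) * E' t"
      unfolding Abs_Rep_Qt by (rule conj_mult)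
    also have "\<dots> = 1" using IQ EE' by simp
    finally have "(E t * Abs (cm_inv (Q t)) * E' (t + 1)) * Abs (Qt Q t) = 1" .
    then have "Rep ((E t * Abs (cm_inv (Q t)) * E' (t + 1)) * Abs (Qt Q t)) = Rep 1" by simp
    then show "cm_mul (Rep (E t * Abs (cm_inv (Q t)) * E' (t + 1))) (Qt Q t) = cm_one"
      by (simp only: Rep_times Rep_Abs_Qt Rep_one)
    have "Abs (Qt Q t) * (E t * Abs (cm_inv (Q t)) * E' (t + 1)) = E (t + 1) * (Abs (Q t) * Abs (cm_inv (Q t))) * E' (t + 1)"
      unfolding Abs_Rep_Qt by (rule conj_mult)
    also have "\<dots> = 1" using QI EE' by simp
    finally have "Abs (Qt Q t) * (E t * Abs (cm_inv (Q t)) * E' (t + 1)) = 1" .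
    then have "Rep (Abs (Qt Q t) * (E t * Abs (cm_inv (Q t)) * E' (t + 1))) = Rep 1" by simp
    then show "cm_mul (Qt Q t) (Rep (E t * Abs (cm_inv (Q t)) * E' (t + 1))) = cm_one"
      by (simp only: Rep_times Rep_Abs_Qt Rep_one)
  qed
qed

lemma Pup_Qt:
  assumes "okQ Q"
  shows "cm_Pup (Qt Q) s j = Rep (E (s + int j) * Abs (cm_Pup Q s j) * E' s)"
proof (induction j)
  case 0
  have "E s * Abs cm_one * E' s = 1" using EE' by (simp add: one_G_def[symmetric])
  then show ?case by (simp add: Rep_one)
next
  case (Suc j)
  have g: "good (Q (s + int j))" "good (cm_Pup Q s j)"
    using assms okQ_def Pup_props[OF assms, of s j, THEN conjunct1] by auto
  have "cm_Pup (Qt Q) s (Suc j) = Rep (Abs (Qt Q (s + int j)) * Abs (cm_Pup (Qt Q) s j))"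
    using Pup_props[OF okQ_Qt[OF assms], of s j] by (simp add: Rep_times Rep_Abs_Qt Abs_inv)
  also have "Abs (Qt Q (s + int j)) * Abs (cm_Pup (Qt Q) s j)
     = (E (s + int j + 1) * Abs (Q (s + int j)) * E' (s + int j)) * (E (s + int j) * Abs (cm_Pup Q s j) * E' s)"
    unfolding Abs_Rep_Qt Suc by (simp only: Rep_inverse)
  also have "\<dots> = E (s + int j + 1) * (Abs (Q (s + int j)) * Abs (cm_Pup Q s j)) * E' s"
    by (rule conj_mult)
  also have "\<dots> = E (s + int (Suc j)) * Abs (cm_Pup Q s (Suc j)) * E' s"
  proof -
    have "s + int j + 1 = s + int (Suc j)" by simp
    moreover have "Abs (Q (s + int j)) * Abs (cm_Pup Q s j) = Abs (cm_Pup Q s (Suc j))"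
      using g by (simp add: Abs_mul)
    ultimately show ?thesis by (simp only:)
  qed
  finally show ?case .
qed

lemma Pdown_Qt:
  assumes "okQ Q"
  shows "cm_Pdown (Qt Q) s j = Rep (E (s - int j) * Abs (cm_Pdown Q s j) * E' s)"
proof (induction j)
  case 0
  have "E s * Abs cm_one * E' s = 1" using EE' by (simp add: one_G_def[symmetric])
  then show ?case by (simp add: Rep_one)
next
  case (Suc j)
  let ?t = "s - int (Suc j)"
  have g: "good (cm_inv (Q ?t))" "good (cm_Pdown Q s j)"
    using inv_props[OF assms, of ?t, THEN conjunct1] Pdown_props[OF assms, of s j, THEN conjunct1] .
  have g2: "good (cm_inv (Qt Q ?t))" "good (cm_Pdown (Qt Q) s j)"
    using inv_props[OF okQ_Qt[OF assms], of ?t, THEN conjunct1] Pdown_props[OF okQ_Qt[OF assms], of s j, THEN conjunct1] .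
  have t1: "?t + 1 = s - int j" by simp
  have "cm_Pdown (Qt Q) s (Suc j) = cm_mul (cm_inv (Qt Q ?t)) (cm_Pdown (Qt Q) s j)"
    by (simp only: cm_Pdown.simps)
  also have "\<dots> = Rep (Abs (cm_inv (Qt Q ?t)) * Abs (cm_Pdown (Qt Q) s j))"
    by (simp only: Rep_times Abs_inv[OF g2(1)] Abs_inv[OF g2(2)])
  also have "Abs (cm_inv (Qt Q ?t)) * Abs (cm_Pdown (Qt Q) s j)
     = (E ?t * Abs (cm_inv (Q ?t)) * E' (s - int j)) * (E (s - int j) * Abs (cm_Pdown Q s j) * E' s)"
    unfolding inv_Qt[OF assms] Suc t1 by (simp only: Rep_inverse)
  also have "\<dots> = E ?t * (Abs (cm_inv (Q ?t)) * Abs (cm_Pdown Q s j)) * E' s"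
    by (rule conj_mult)
  also have "\<dots> = E ?t * Abs (cm_Pdown Q s (Suc j)) * E' s"
  proof -
    have "Abs (cm_inv (Q ?t)) * Abs (cm_Pdown Q s j) = Abs (cm_Pdown Q s (Suc j))"
      using g by (simp only: Abs_mul cm_Pdown.simps)
    then show ?thesis by (simp only:)
  qed
  finally show ?case .
qed

lemma Pn_Qt:
  assumes "okQ Q"
  shows "cm_Pn (Qt Q) s k = Rep (E (s + k) * Abs (cm_Pn Q s k) * E' s)"
proof (cases "k \<ge> 0")
  case True then show ?thesis using Pup_Qt[OF assms, of s "nat k"] by (simp add: cm_Pn_def)
next
  case False then show ?thesis using Pdown_Qt[OF assms, of s "nat (- k)"] by (simp add: cm_Pn_def)
qed

end


context gauge
begin

lemma Pn_const_right:
  assumes "okQ Q"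
  shows "cm_mul (cm_Pn Q s k) (cm_const (e' s)) m p = e' (s + k) p * cm_Pn (Qt Q) s k m p"
proof -
  have g: "good (cm_Pn Q s k)" using Pn_props[OF assms] by blast
  have "cm_Pn (Qt Q) s k m p = e (s + k) p * cm_mul (cm_Pn Q s k) (cm_const (e' s)) m p"
    unfolding Pn_Qt[OF assms] E_def E'_def by (rule Rep_conj[OF g se se'])
  then have "e' (s + k) p * cm_Pn (Qt Q) s k m p = (e (s + k) p * e' (s + k) p) * cm_mul (cm_Pn Q s k) (cm_const (e' s)) m p"
    by (simp add: algebra_simps)
  then show ?thesis using ee by simp
qed

lemma expand_Qt:
  assumes "okQ Q" "good X" "expand X Q s n b"
  shows "expand (Rep (E s * Abs X * E' s)) (Qt Q) s n (\<lambda>j p. b j p * e s p * e' (s + (int n - int j)) p)"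
  unfolding expand_iff[OF okQ_Qt[OF assms(1)]]
proof (intro allI)
  fix m p
  have mX: "is_mdo X" using assms(2) good_def by auto
  have "Rep (E s * Abs X * E' s) m p = e s p * cm_mul X (cm_const (e' s)) m p"
    unfolding E_def E'_def by (rule Rep_conj[OF assms(2) se se'])
  also have "\<dots> = e s p * Sum_any (\<lambda>j. b j p * cm_mul (cm_Pn Q s (int n - int j)) (cm_const (e' s)) m p)"
    using conj_coef[OF assms(1,3) mX] by simp
  also have "\<dots> = Sum_any (\<lambda>j. b j p * e s p * e' (s + (int n - int j)) p * cm_Pn (Qt Q) s (int n - int j) m p)"
    unfolding SA_cmult[symmetric] Pn_const_right[OF assms(1)] by (simp add: algebra_simps)
  also have "\<dots> = (\<Sum>j\<in>{j::nat. int j \<le> int n - m}. b j p * e s p * e' (s + (int n - int j)) p * cm_Pn (Qt Q) s (int n - int j) m p)"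
  proof (rule SA_box)
    show "finite {j::nat. int j \<le> int n - m}" by (rule finite_subset[of _ "{..nat (int n - m)}"]) auto
    fix j assume "j \<notin> {j::nat. int j \<le> int n - m}"
    then have "m > int n - int j" by simp
    then show "b j p * e s p * e' (s + (int n - int j)) p * cm_Pn (Qt Q) s (int n - int j) m p = 0"
      using Pn_props[OF okQ_Qt[OF assms(1)], of s "int n - int j"] bnd_zero by (metis mult_zero_right)
  qed
  finally show "Rep (E s * Abs X * E' s) m p = (\<Sum>j\<in>{j::nat. int j \<le> int n - m}.
      b j p * e s p * e' (s + (int n - int j)) p * cm_Pn (Qt Q) s (int n - int j) m p)" .
qed

lemma cm_b_Qt:
  assumes "okQ P" "good (L s)" "bnd (cm_pow (L s) n) (int n)"
  shows "cm_b (\<lambda>s. Rep (E s * Abs (L s) * E' s)) (Qt P) s n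
       = (\<lambda>j p. cm_b L P s n j p * e s p * e' (s + (int n - int j)) p)"
proof -
  have LL: "Rep (Abs (L s)) = L s" using assms(2) by (rule Abs_inv)
  have pw: "cm_pow (L s) n = Rep (Abs (L s) ^ n)" using Rep_pow[of "Abs (L s)" n] LL by simp
  have gX: "good (cm_pow (L s) n)" unfolding pw by (rule Rep_good)
  have "cm_pow (Rep (E s * Abs (L s) * E' s)) n = Rep ((E s * Abs (L s) * E' s) ^ n)" by (rule Rep_pow)
  also have "\<dots> = Rep (E s * Abs (cm_pow (L s) n) * E' s)"
    unfolding conj_pow pw by (simp add: Rep_inverse)
  finally have eq: "cm_pow (Rep (E s * Abs (L s) * E' s)) n = Rep (E s * Abs (cm_pow (L s) n) * E' s)" .
  have ex: "expand (cm_pow (L s) n) P s n (cm_b L P s n)" by (rule cm_b_char[where L=L and s=s, OF assms(1,3)])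
  show ?thesis
    by (rule cm_b_eq[OF okQ_Qt[OF assms(1)]]) (simp only: eq, rule expand_Qt[OF assms(1) gX ex])
qed

end


lemma conv_conj:
  assumes "good X" "cm_smooth f" "cm_smooth g"
  shows "cm_mul (cm_const f) (cm_mul X (cm_const g)) = Rep (cG f * Abs X * cG g)"
  using assms by (simp add: mult.assoc Rep_times Rep_cG Abs_inv)

lemma pow_bnd: "good A \<Longrightarrow> bnd A 1 \<Longrightarrow> bnd (cm_pow A n) (int n)"
proof (induction n)
  case 0 then show ?case using const_bnd by (simp add: cm_one_def)
next
  case (Suc n)
  have g: "good (cm_pow A n)" using Rep_pow[of "Abs A" n] Suc.prems Abs_inv Rep_good by metis
  have "bnd (cm_mul A (cm_pow A n)) (1 + int n)"
    using mul_bnd[OF Suc.prems(2) Suc.IH[OF Suc.prems]] Suc.prems(1) g good_def by blast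
  then show ?case by (simp add: add.commute)
qed

lemma smooth_zero_fun: "cm_smooth (\<lambda>p. 0)" by simp

lemma cmKP_unpack:
  assumes "cmKP \<alpha> L P"
  shows "\<And>s. good (L s)" "\<And>s. bnd (L s) 1" "\<And>s. L s 1 = (\<lambda>p. 1)"
    "\<And>s. good (P s)" "okQ P" "\<And>s i. i < 0 \<Longrightarrow> P s i = (\<lambda>p. 0)"
    "\<And>s p. (1 - \<alpha>) * P s 1 p * L s 0 p + \<alpha> * P s 0 p = 0"
    "\<And>s. cm_mul (L (s + 1)) (P s) = cm_mul (P s) (L s)"
    "\<And>n s. n \<ge> 1 \<Longrightarrow> cm_dop n (L s) = cm_comm (cm_B \<alpha> L P s n) (L s)"
    "\<And>n s. n \<ge> 1 \<Longrightarrow> cm_dop n (P s) = cm_sub (cm_mul (cm_B \<alpha> L P (s + 1) n) (P s)) (cm_mul (P s) (cm_B \<alpha> L P s n))"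
proof -
  note h = assms[unfolded cmKP_def]
  note h1 = h[THEN conjunct1]
  note h2 = h[THEN conjunct2, THEN conjunct1]
  note h3 = h[THEN conjunct2, THEN conjunct2, THEN conjunct1]
  note h4 = h[THEN conjunct2, THEN conjunct2, THEN conjunct2, THEN conjunct1]
  note h5 = h[THEN conjunct2, THEN conjunct2, THEN conjunct2, THEN conjunct2, THEN conjunct1]
  note h6 = h[THEN conjunct2, THEN conjunct2, THEN conjunct2, THEN conjunct2, THEN conjunct2]
  show gL: "good (L s)" for s unfolding good_def using h1 by simp
  show bL: "bnd (L s) 1" for s unfolding bnd_def using h1 by simp
  show "L s 1 = (\<lambda>p. 1)" for s using h1 by simp
  have bP: "bnd (P s) 1" for s unfolding bnd_def using h2 by simp
  have sP: "cm_smooth (P s m)" for s m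
  proof (cases "m = 0 \<or> m = 1")
    case True then show ?thesis using h2 by auto
  next
    case False then have "P s m = (\<lambda>p. 0)" using h2 by simp
    then show ?thesis by simp
  qed
  show gP: "good (P s)" for s unfolding good_def is_mdo_bnd using bP sP by blast
  have nz: "\<forall>p. P s 1 p \<noteq> 0" for s using h2 by simp
  show "okQ P" unfolding okQ_def using gP bP nz by simp
  show "\<And>s i. i < 0 \<Longrightarrow> P s i = (\<lambda>p. 0)" using h2 by simp
  show "\<And>s p. (1 - \<alpha>) * P s 1 p * L s 0 p + \<alpha> * P s 0 p = 0" using h3 by simp
  show "\<And>s. cm_mul (L (s + 1)) (P s) = cm_mul (P s) (L s)" using h4 by simp
  show "\<And>n s. n \<ge> 1 \<Longrightarrow> cm_dop n (L s) = cm_comm (cm_B \<alpha> L P s n) (L s)" using h5 by simp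
  show "\<And>n s. n \<ge> 1 \<Longrightarrow> cm_dop n (P s) = cm_sub (cm_mul (cm_B \<alpha> L P (s + 1) n) (P s)) (cm_mul (P s) (cm_B \<alpha> L P s n))"
    using h6 by simp
qed

lemma cG_uminus: "cm_smooth f \<Longrightarrow> cG (\<lambda>p. - f p) = - cG f"
  by (rule Rep_inject[THEN iffD1]) (simp add: Rep_uminus Rep_cG smooth_neg cm_neg_def cm_const_def fun_eq_iff)

lemma Rep_comm: "cm_comm (Rep a) (Rep b) = Rep (a * b - b * a)"
  by (simp add: cm_comm_def Rep_minus Rep_times)

lemma b11:
  assumes "okQ P" "good (L s)" "bnd (L s) 1" "L s 1 = (\<lambda>p. 1)"
  shows "cm_b L P s 1 1 p = L s 0 p - P s 0 p / P s 1 p"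
proof -
  define b where "b = cm_b L P s 1"
  have pw: "cm_pow (L s) 1 = L s" using assms(2) good_def by (simp add: mul_one_right)
  have ex: "expand (L s) P s 1 b" unfolding b_def using cm_b_char[where L=L and s=s and n=1, OF assms(1)] pw assms(3) by simp
  have e: "L s m p = (\<Sum>j\<in>{j::nat. int j \<le> 1 - m}. b j p * cm_Pn P s (1 - int j) m p)" for m
    using ex expand_iff[OF assms(1)] by simp
  have P1: "cm_Pn P s 1 = P s" using okQ_def assms(1) good_def by (simp add: cm_Pn_def mul_one_right)
  have P0: "cm_Pn P s 0 = cm_one" by (simp add: cm_Pn_def)
  have s1: "{j::nat. int j \<le> 1 - 1} = {0}" by auto
  have s0: "{j::nat. int j \<le> 1 - 0} = {0, 1}" by auto
  have e1: "1 = b 0 p * P s 1 p" using e[of 1] assms(4) unfolding s1 by (simp add: P1 fun_eq_iff)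
  have e0: "L s 0 p = b 0 p * P s 0 p + b 1 p" using e[of 0] unfolding s0 by (simp add: P1 P0 cm_one_def cm_const_def)
  have nz: "P s 1 p \<noteq> 0" using assms(1) okQ_def by auto
  have "b 0 p = 1 / P s 1 p" using e1 nz by (simp add: field_simps)
  then show ?thesis using e0 nz unfolding b_def by (simp add: field_simps)
qed

theorem mainTheorem18:
  fixes \<alpha> \<beta> :: complex
    and L P :: "int \<Rightarrow> mdo"
    and \<phi> :: "int \<Rightarrow> coef"
  assumes "\<alpha> \<noteq> 0"
    and "cmKP \<alpha> L P"
    and "\<forall>s. cm_smooth (\<phi> s)"
    and "\<forall>s. cm_pd 0 (\<phi> s) = cm_b L P s 1 1"
    and "\<forall>n\<ge>1. \<forall>s. cm_pd n (\<phi> s) = cm_b L P s n n"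
  shows "cmKP \<beta>
     (\<lambda>s. cm_mul (cm_const (\<lambda>p. exp ((\<alpha> - \<beta>) * \<phi> s p)))
            (cm_mul (L s) (cm_const (\<lambda>p. exp (- (\<alpha> - \<beta>) * \<phi> s p)))))
     (\<lambda>s. cm_mul (cm_const (\<lambda>p. exp ((\<alpha> - \<beta>) * \<phi> (s + 1) p)))
            (cm_mul (P s) (cm_const (\<lambda>p. exp (- (\<alpha> - \<beta>) * \<phi> s p)))))"
proof -
  note U = cmKP_unpack[OF assms(2)]
  define c where "c = \<alpha> - \<beta>"
  define e where "e = (\<lambda>s p. exp ((\<alpha> - \<beta>) * \<phi> s p))"
  define e' where "e' = (\<lambda>s p. exp (- (\<alpha> - \<beta>) * \<phi> s p))"
  have sphi: "cm_smooth (\<phi> s)" for s using assms(3) by blast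
  have se: "cm_smooth (e s)" for s unfolding e_def using sphi by (intro smooth_exp smooth_cmult)
  have se': "cm_smooth (e' s)" for s unfolding e'_def using sphi by (intro smooth_exp smooth_cmult)
  have ee: "e s p * e' s p = 1" for s p unfolding e_def e'_def mult_exp_exp by (simp add: algebra_simps)
  interpret g: gauge e e' using se se' ee by unfold_locales
  define Lt where "Lt = (\<lambda>s. Rep (g.E s * Abs (L s) * g.E' s))"
  have Lt_eq: "(\<lambda>s. cm_mul (cm_const (\<lambda>p. exp ((\<alpha> - \<beta>) * \<phi> s p)))
            (cm_mul (L s) (cm_const (\<lambda>p. exp (- (\<alpha> - \<beta>) * \<phi> s p))))) = Lt"
    unfolding Lt_def g.E_def g.E'_def using conv_conj[OF U(1) se se'] by (simp add: e_def e'_def)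
  have Pt_eq: "(\<lambda>s. cm_mul (cm_const (\<lambda>p. exp ((\<alpha> - \<beta>) * \<phi> (s + 1) p)))
            (cm_mul (P s) (cm_const (\<lambda>p. exp (- (\<alpha> - \<beta>) * \<phi> s p))))) = g.Qt P"
    unfolding g.Qt_def[abs_def] g.E_def g.E'_def using conv_conj[OF U(4) se se'] by (simp add: e_def e'_def)
  have okPt: "okQ (g.Qt P)" by (rule g.okQ_Qt[OF U(5)])
  have G1: "\<forall>s. is_mdo (Lt s) \<and> Lt s 1 = (\<lambda>p. 1) \<and> (\<forall>m>1. Lt s m = (\<lambda>p. 0)) \<and> (\<forall>m. cm_smooth (Lt s m))"
  proof
    fix s
    have gl: "good (Lt s)" unfolding Lt_def by (rule Rep_good)
    have bl: "bnd (Lt s) 1" unfolding Lt_def g.E_def g.E'_def by (rule conj_bnd[OF U(1,2) se se'])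
    have l1: "Lt s 1 = (\<lambda>p. 1)"
      unfolding Lt_def g.E_def g.E'_def using conj_coef1[OF U(1,2) se se'] U(3) ee by (simp add: fun_eq_iff)
    have "is_mdo (Lt s)" "\<forall>m. cm_smooth (Lt s m)" using gl unfolding good_def by simp_all
    moreover have "\<forall>m>1. Lt s m = (\<lambda>p. 0)" using bl unfolding bnd_def by simp
    ultimately show "is_mdo (Lt s) \<and> Lt s 1 = (\<lambda>p. 1) \<and> (\<forall>m>1. Lt s m = (\<lambda>p. 0)) \<and> (\<forall>m. cm_smooth (Lt s m))"
      using l1 by simp
  qed
  have G2: "\<forall>s. (\<forall>m::int. m \<noteq> 0 \<and> m \<noteq> 1 \<longrightarrow> g.Qt P s m = (\<lambda>p. 0)) \<and> (\<forall>p. g.Qt P s 1 p \<noteq> 0)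
      \<and> cm_smooth (g.Qt P s 0) \<and> cm_smooth (g.Qt P s 1)"
  proof
    fix s
    have gq: "good (g.Qt P s)" "bnd (g.Qt P s) 1" "\<forall>p. g.Qt P s 1 p \<noteq> 0" using okPt okQ_def by auto
    have bP: "bnd (P s) 1" using U(5) unfolding okQ_def by simp
    have neg: "g.Qt P s m = (\<lambda>p. 0)" if "m < 0" for m
      unfolding g.Qt_def g.E_def g.E'_def using conj_coef_neg[OF U(4) bP U(6)[of _ s] se se' that]
      by (simp add: fun_eq_iff)
    have "\<forall>m::int. m \<noteq> 0 \<and> m \<noteq> 1 \<longrightarrow> g.Qt P s m = (\<lambda>p. 0)"
    proof (intro allI impI)
      fix m :: int assume m: "m \<noteq> 0 \<and> m \<noteq> 1"
      show "g.Qt P s m = (\<lambda>p. 0)"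
      proof (cases "m < 0")
        case True then show ?thesis by (rule neg)
      next
        case False then have "m > 1" using m by simp
        then show ?thesis using gq(2) unfolding bnd_def by simp
      qed
    qed
    then show "(\<forall>m::int. m \<noteq> 0 \<and> m \<noteq> 1 \<longrightarrow> g.Qt P s m = (\<lambda>p. 0)) \<and> (\<forall>p. g.Qt P s 1 p \<noteq> 0)
      \<and> cm_smooth (g.Qt P s 0) \<and> cm_smooth (g.Qt P s 1)" using gq unfolding good_def by simp
  qed
  have G3: "\<forall>s p. (1 - \<beta>) * g.Qt P s 1 p * Lt s 0 p + \<beta> * g.Qt P s 0 p = 0"
  proof (intro allI)
    fix s p
    have bP: "bnd (P s) 1" using U(5) unfolding okQ_def by simp
    have p1nz: "P s 1 p \<noteq> 0" using U(5) unfolding okQ_def by simp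
    define d where "d = cm_pd 0 (\<phi> s) p"
    have de': "cm_pd 0 (e' s) p = e' s p * (- (\<alpha> - \<beta>) * d)"
    proof -
      have l: "ld (\<lambda>p. - (\<alpha> - \<beta>) * \<phi> s p)" using sphi by (intro smooth_ld smooth_cmult)
      have "cm_pd 0 (e' s) = (\<lambda>p. e' s p * cm_pd 0 (\<lambda>p. - (\<alpha> - \<beta>) * \<phi> s p) p)"
        unfolding e'_def by (rule pd_exp[OF l])
      also have "cm_pd 0 (\<lambda>p. - (\<alpha> - \<beta>) * \<phi> s p) = (\<lambda>p. - (\<alpha> - \<beta>) * cm_pd 0 (\<phi> s) p)"
        using sphi by (intro pd_cmult smooth_ld)
      finally show ?thesis unfolding d_def by simp
    qed
    have f1: "g.Qt P s 1 p = e (s + 1) p * P s 1 p * e' s p"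
      unfolding g.Qt_def g.E_def g.E'_def by (rule conj_coef1[OF U(4) bP se se'])
    have f2: "g.Qt P s 0 p = e (s + 1) p * (P s 0 p * e' s p + P s 1 p * (e' s p * (- (\<alpha> - \<beta>) * d)))"
      unfolding g.Qt_def g.E_def g.E'_def conj_coef0[OF U(4) bP se se'] de' ..
    have f3: "Lt s 0 p = e s p * (L s 0 p * e' s p + e' s p * (- (\<alpha> - \<beta>) * d))"
      unfolding Lt_def g.E_def g.E'_def conj_coef0[OF U(1,2) se se'] de' U(3) by simp
    have f4: "e s p * e' s p = 1" by (rule ee)
    have f6: "(1 - \<alpha>) * P s 1 p * L s 0 p + \<alpha> * P s 0 p = 0" by (rule U(7))
    have f5: "\<alpha> * d = L s 0 p"
    proof -
      have "d = L s 0 p - P s 0 p / P s 1 p" unfolding d_def using assms(4) b11[OF U(5,1,2,3)] by simp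
      then have dd: "d * P s 1 p = L s 0 p * P s 1 p - P s 0 p" using p1nz by (simp add: field_simps)
      have "\<alpha> * d * P s 1 p = \<alpha> * L s 0 p * P s 1 p - \<alpha> * P s 0 p" using dd by algebra
      also have "\<dots> = L s 0 p * P s 1 p" using f6 by algebra
      finally show ?thesis using p1nz by simp
    qed
    define X where "X = (1 - \<beta>) * P s 1 p * (L s 0 p - (\<alpha> - \<beta>) * d) + \<beta> * P s 0 p - \<beta> * P s 1 p * (\<alpha> - \<beta>) * d"
    have "(1 - \<beta>) * g.Qt P s 1 p * Lt s 0 p + \<beta> * g.Qt P s 0 p = e (s + 1) p * e' s p * X"
      unfolding f1 f2 f3 X_def using f4 by algebra
    moreover have "\<alpha> * X = \<beta> * ((1 - \<alpha>) * P s 1 p * L s 0 p + \<alpha> * P s 0 p) - (\<alpha> - \<beta>) * P s 1 p * (\<alpha> * d - L s 0 p)"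
      unfolding X_def by algebra
    then have "\<alpha> * X = 0" using f5 f6 by simp
    then have "X = 0" using assms(1) by simp
    ultimately show "(1 - \<beta>) * g.Qt P s 1 p * Lt s 0 p + \<beta> * g.Qt P s 0 p = 0" by simp
  qed
  have G4: "\<forall>s. cm_mul (Lt (s + 1)) (g.Qt P s) = cm_mul (g.Qt P s) (Lt s)"
  proof
    fix s
    have gl: "good (L (s + 1))" "good (P s)" "good (L s)" using U(1,4) by auto
    have "Abs (L (s + 1)) * Abs (P s) = Abs (P s) * Abs (L s)"
      using U(8)[of s] gl by (simp add: g.Abs_mul[symmetric])
    then have "(g.E (s + 1) * Abs (L (s + 1)) * g.E' (s + 1)) * (g.E (s + 1) * Abs (P s) * g.E' s)
        = (g.E (s + 1) * Abs (P s) * g.E' s) * (g.E s * Abs (L s) * g.E' s)"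
      by (simp add: g.conj_mult)
    then show "cm_mul (Lt (s + 1)) (g.Qt P s) = cm_mul (g.Qt P s) (Lt s)"
      unfolding Lt_def g.Qt_def by (simp add: Rep_times[symmetric])
  qed
  define b where "b = (\<lambda>s n. cm_b L P s n n)"
  have phin: "cm_pd n (\<phi> s) = b s n" if "n \<ge> 1" for n s using assms(5) that unfolding b_def by blast
  have sb: "cm_smooth (b s n)" if "n \<ge> 1" for n s using phin[OF that] smooth_pd[OF sphi] by metis
  define Lg where "Lg = (\<lambda>s. Abs (L s))"
  define Pg where "Pg = (\<lambda>s. Abs (P s))"
  have RLg: "Rep (Lg s) = L s" for s unfolding Lg_def by (rule Abs_inv[OF U(1)])
  have RPg: "Rep (Pg s) = P s" for s unfolding Pg_def by (rule Abs_inv[OF U(4)])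
  define Bg where "Bg = (\<lambda>s n. pG (Lg s ^ n) - cG (\<lambda>p. \<alpha> * b s n p))"
  define K where "K = (\<lambda>s n. cG (\<lambda>p. (\<alpha> - \<beta>) * b s n p))"
  have RBg: "cm_B \<alpha> L P s n = Rep (Bg s n)" if "n \<ge> 1" for s n
    unfolding Bg_def cm_B_def using sb[OF that]
    by (simp add: Rep_minus Rep_pG Rep_cG smooth_cmult Rep_pow[symmetric] RLg b_def)
  have hypL: "dG n (Lg s) = Bg s n * Lg s - Lg s * Bg s n" if "n \<ge> 1" for n s
    by (rule Rep_inject[THEN iffD1]) (simp add: Rep_dG RLg U(9)[OF that] RBg[OF that] Rep_comm[symmetric])
  have hypP: "dG n (Pg s) = Bg (s + 1) n * Pg s - Pg s * Bg s n" if "n \<ge> 1" for n s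
    by (rule Rep_inject[THEN iffD1])
      (simp add: Rep_dG RPg U(10)[OF that] RBg[OF that] Rep_minus Rep_times cm_comm_def)
  have Lt_Lg: "Lt s = Rep (g.E s * Lg s * g.E' s)" for s unfolding Lt_def Lg_def ..
  have Qt_Pg: "g.Qt P s = Rep (g.E (s + 1) * Pg s * g.E' s)" for s unfolding g.Qt_def Pg_def ..
  have sK: "cm_smooth (\<lambda>p. (\<alpha> - \<beta>) * b s n p)" if "n \<ge> 1" for s n using sb[OF that] by (rule smooth_cmult)
  have KE: "K s n * g.E t = g.E t * K s n" if "n \<ge> 1" for s n t
    unfolding K_def g.E_def using cG_comm[OF sK[OF that] se] .
  have KE': "K s n * g.E' t = g.E' t * K s n" if "n \<ge> 1" for s n t
    unfolding K_def g.E'_def using cG_comm[OF sK[OF that] se'] .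
  have dE: "dG n (g.E s) = g.E s * K s n" if "n \<ge> 1" for n s
  proof -
    have l: "ld (\<lambda>p. (\<alpha> - \<beta>) * \<phi> s p)" using sphi by (intro smooth_ld smooth_cmult)
    have "cm_pd n (e s) = (\<lambda>p. e s p * cm_pd n (\<lambda>p. (\<alpha> - \<beta>) * \<phi> s p) p)"
      unfolding e_def by (rule pd_exp[OF l])
    also have "cm_pd n (\<lambda>p. (\<alpha> - \<beta>) * \<phi> s p) = (\<lambda>p. (\<alpha> - \<beta>) * b s n p)"
      using sphi phin[OF that] by (simp add: pd_cmult smooth_ld)
    finally have "cm_pd n (e s) = (\<lambda>p. e s p * ((\<alpha> - \<beta>) * b s n p))" .
    then show ?thesis unfolding g.E_def K_def
      by (simp add: dG_cG se cG_mult sK[OF that])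
  qed
  have dE': "dG n (g.E' s) = - (g.E' s * K s n)" if "n \<ge> 1" for n s
  proof -
    have l: "ld (\<lambda>p. - (\<alpha> - \<beta>) * \<phi> s p)" using sphi by (intro smooth_ld smooth_cmult)
    have "cm_pd n (e' s) = (\<lambda>p. e' s p * cm_pd n (\<lambda>p. - (\<alpha> - \<beta>) * \<phi> s p) p)"
      unfolding e'_def by (rule pd_exp[OF l])
    also have "cm_pd n (\<lambda>p. - (\<alpha> - \<beta>) * \<phi> s p) = (\<lambda>p. - ((\<alpha> - \<beta>) * b s n p))"
      unfolding pd_cmult[OF smooth_ld[OF sphi]] phin[OF that] by (simp add: fun_eq_iff algebra_simps)
    finally have "cm_pd n (e' s) = (\<lambda>p. e' s p * (- ((\<alpha> - \<beta>) * b s n p)))" .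
    then have "dG n (g.E' s) = cG (e' s) * cG (\<lambda>p. - ((\<alpha> - \<beta>) * b s n p))"
      unfolding g.E'_def by (simp add: dG_cG se' cG_mult sK[OF that] smooth_neg)
    then show ?thesis unfolding g.E'_def K_def using cG_uminus[OF sK[OF that]] by simp
  qed
  have Bt: "cm_B \<beta> Lt (g.Qt P) s n = Rep (g.E s * Bg s n * g.E' s + K s n)" if "n \<ge> 1" for s n
  proof -
    have bt: "cm_b Lt (g.Qt P) s n n = b s n"
    proof -
      have "cm_b Lt (g.Qt P) s n = (\<lambda>j p. cm_b L P s n j p * e s p * e' (s + (int n - int j)) p)"
        unfolding Lt_def by (rule g.cm_b_Qt[OF U(5) U(1) pow_bnd[OF U(1,2)]])
      then show ?thesis unfolding b_def using ee by (simp add: fun_eq_iff mult.assoc)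
    qed
    have pw: "cm_pow (Lt s) n = Rep (g.E s * Lg s ^ n * g.E' s)"
      unfolding Lt_Lg Rep_pow g.conj_pow ..
    have sbb: "cm_smooth (\<lambda>p. \<beta> * b s n p)" "cm_smooth (\<lambda>p. \<alpha> * b s n p)" using sb[OF that] by auto
    have "cm_B \<beta> Lt (g.Qt P) s n = Rep (g.E s * pG (Lg s ^ n) * g.E' s - cG (\<lambda>p. \<beta> * b s n p))"
    proof -
      have pj: "cm_proj (Rep (cG (e s) * Lg s ^ n * cG (e' s))) = Rep (cG (e s) * pG (Lg s ^ n) * cG (e' s))"
        by (simp only: Rep_pG[symmetric] pG_conj[OF se se'])
      show ?thesis unfolding cm_B_def bt pw g.E_def g.E'_def pj
        by (simp add: Rep_minus Rep_cG sbb)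
    qed
    also have "g.E s * pG (Lg s ^ n) * g.E' s - cG (\<lambda>p. \<beta> * b s n p) = g.E s * Bg s n * g.E' s + K s n"
    proof -
      have c1: "g.E s * cG (\<lambda>p. \<alpha> * b s n p) * g.E' s = cG (\<lambda>p. \<alpha> * b s n p)"
        unfolding g.E_def g.E'_def using cG_comm[OF se sbb(2)] g.EE'[unfolded g.E_def g.E'_def]
        by (simp add: mult.assoc)
      have c2: "cG (\<lambda>p. \<alpha> * b s n p) - cG (\<lambda>p. \<beta> * b s n p) = K s n"
        unfolding K_def using cG_diff[OF sbb(2) sbb(1)] by (simp add: algebra_simps)
      have "pG (Lg s ^ n) = Bg s n + cG (\<lambda>p. \<alpha> * b s n p)" unfolding Bg_def by simp
      then have "g.E s * pG (Lg s ^ n) * g.E' s = g.E s * Bg s n * g.E' s + cG (\<lambda>p. \<alpha> * b s n p)"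
        using c1 by (simp add: algebra_simps)
      then show ?thesis using c2 by (simp add: algebra_simps)
    qed
    finally show ?thesis .
  qed
  have G5: "\<forall>n\<ge>1. \<forall>s. cm_dop n (Lt s) = cm_comm (cm_B \<beta> Lt (g.Qt P) s n) (Lt s)"
  proof (intro allI impI)
    fix n :: nat and s assume n: "n \<ge> 1"
    have r1: "g.E' s * (g.E s * x) = x" for x using g.E'E by (simp add: mult.assoc[symmetric])
    have r2: "K s n * (g.E s * x) = g.E s * (K s n * x)" for x using KE[OF n] by (simp add: mult.assoc[symmetric])
    have "dG n (g.E s * Lg s * g.E' s) = (g.E s * Bg s n * g.E' s + K s n) * (g.E s * Lg s * g.E' s)
         - (g.E s * Lg s * g.E' s) * (g.E s * Bg s n * g.E' s + K s n)"
      by (simp add: dG_mult dE[OF n] dE'[OF n] hypL[OF n] algebra_simps r1 r2 KE'[OF n])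
    then show "cm_dop n (Lt s) = cm_comm (cm_B \<beta> Lt (g.Qt P) s n) (Lt s)"
      unfolding Bt[OF n] Lt_Lg Rep_comm Rep_dG[symmetric] by simp
  qed
  have G6: "\<forall>n\<ge>1. \<forall>s. cm_dop n (g.Qt P s) =
          cm_sub (cm_mul (cm_B \<beta> Lt (g.Qt P) (s + 1) n) (g.Qt P s)) (cm_mul (g.Qt P s) (cm_B \<beta> Lt (g.Qt P) s n))"
  proof (intro allI impI)
    fix n :: nat and s assume n: "n \<ge> 1"
    have r1: "g.E' t * (g.E t * x) = x" for x t using g.E'E by (simp add: mult.assoc[symmetric])
    have r2: "K t n * (g.E t * x) = g.E t * (K t n * x)" for x t
      using KE[OF n] by (simp add: mult.assoc[symmetric])
    have "dG n (g.E (s + 1) * Pg s * g.E' s) = (g.E (s + 1) * Bg (s + 1) n * g.E' (s + 1) + K (s + 1) n) * (g.E (s + 1) * Pg s * g.E' s)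
         - (g.E (s + 1) * Pg s * g.E' s) * (g.E s * Bg s n * g.E' s + K s n)"
      by (simp add: dG_mult dE[OF n] dE'[OF n] hypP[OF n] algebra_simps r1 r2 KE'[OF n])
    then show "cm_dop n (g.Qt P s) =
          cm_sub (cm_mul (cm_B \<beta> Lt (g.Qt P) (s + 1) n) (g.Qt P s)) (cm_mul (g.Qt P s) (cm_B \<beta> Lt (g.Qt P) s n))"
      unfolding Bt[OF n] Qt_Pg Rep_times[symmetric] Rep_minus[symmetric] Rep_dG[symmetric] cm_sub_def[symmetric]
      by simp
  qed
  show ?thesis unfolding Lt_eq Pt_eq cmKP_def by (intro conjI G1 G2 G3 G4 G5 G6)
qed


end
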